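(* Let $G$ and $H$ be groups and $\varphi\colon G\to \mathrm{Aut}(H)$ an action. Define subgroups of $H$ recursively by $L_1=V_1=H$ and, for $n\geq 2$, $K_n=\langle \varphi(g)(h)h^{-1} : g\in\Gamma_{n-1}(G), h\in H\rangle$, $H_n=\langle \varphi(g)(h)h^{-1} : g\in G, h\in L_{n-1}\rangle$, $\widetilde H_n=\langle \varphi(g)(h)h^{-1} : g\in G, h\in V_{n-1}\rangle$, $L_n=\langle K_n, H_n, [H,L_{n-1}]\rangle$, $V_n=\langle \widetilde H_n, [H,V_{n-1}]\rangle$. Then for every $n\geq 1$, $\varphi$ restricts to an action of $\Gamma_n(G)$ on $L_n$ and of $G^{(n-1)}$ on $V_n$ (by automorphisms), and: (1) $\Gamma_n(H\rtimes_\varphi G)=L_n\rtimes_\varphi \Gamma_n(G)$; (2) $(H\rtimes_\varphi G)^{(n-1)}\subseteq V_n\rtimes_\varphi G^{(n-1)}$.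
   Context: $[x,y]=xyx^{-1}y^{-1}$; for subgroups $A,B$, $[A,B]$ is the subgroup generated by all $[a,b]$. Lower central series: $\Gamma_1(G)=G$, $\Gamma_{i+1}(G)=[\Gamma_i(G),G]$. Derived series: $G^{(0)}=G$, $G^{(i+1)}=[G^{(i)},G^{(i)}]$. In $H\rtimes_\varphi G$ the product is $(h,g)(h',g')=(h\,\varphi(g)(h'),gg')$. *)

theory Defs
  imports "HOL-Algebra.Algebra"
begin

definition comm_subgroup :: "('a, 'b) monoid_scheme \<Rightarrow> 'a set \<Rightarrow> 'a set \<Rightarrow> 'a set" where
  "comm_subgroup G A B = generate G (\<Union>a \<in> A. \<Union>b \<in> B.
      {a \<otimes>\<^bsub>G\<^esub> b \<otimes>\<^bsub>G\<^esub> inv\<^bsub>G\<^esub> a \<otimes>\<^bsub>G\<^esub> inv\<^bsub>G\<^esub> b})"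

text \<open>Lower central series, indexed from 1 (index 0 is a junk value).\<close>
fun lcs :: "('a, 'b) monoid_scheme \<Rightarrow> nat \<Rightarrow> 'a set" where
  "lcs G 0 = carrier G"
| "lcs G (Suc 0) = carrier G"
| "lcs G (Suc (Suc n)) = comm_subgroup G (lcs G (Suc n)) (carrier G)"

text \<open>Derived series G^(i), indexed from 0, using the library's derived subgroup.\<close>
definition derived_series :: "('a, 'b) monoid_scheme \<Rightarrow> nat \<Rightarrow> 'a set" where
  "derived_series G i = (derived G ^^ i) (carrier G)"

definition semidirect :: "('a, 'c) monoid_scheme \<Rightarrow> ('b, 'd) monoid_scheme
    \<Rightarrow> ('b \<Rightarrow> 'a \<Rightarrow> 'a) \<Rightarrow> ('a \<times> 'b) monoid" where
  "semidirect H G \<phi> =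
     \<lparr> carrier = carrier H \<times> carrier G,
       Group.monoid.mult = (\<lambda>(h, g) (h', g'). (h \<otimes>\<^bsub>H\<^esub> \<phi> g h', g \<otimes>\<^bsub>G\<^esub> g')),
       one = (\<one>\<^bsub>H\<^esub>, \<one>\<^bsub>G\<^esub>) \<rparr>"

definition twist_subgroup :: "('a, 'c) monoid_scheme \<Rightarrow> ('b \<Rightarrow> 'a \<Rightarrow> 'a) \<Rightarrow> 'b set \<Rightarrow> 'a set \<Rightarrow> 'a set" where
  "twist_subgroup H \<phi> A B = generate H (\<Union>g \<in> A. \<Union>h \<in> B. {\<phi> g h \<otimes>\<^bsub>H\<^esub> inv\<^bsub>H\<^esub> h})"

text \<open>The subgroups L_n (indexed from 1; index 0 junk).
  K_n = twist G-part over \<Gamma>_{n-1}(G) and H; H_n = twist over G and L_{n-1};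
  L_n = \<langle>K_n, H_n, [H, L_{n-1}]\<rangle>.\<close>
fun Lser :: "('b, 'd) monoid_scheme \<Rightarrow> ('a, 'c) monoid_scheme \<Rightarrow> ('b \<Rightarrow> 'a \<Rightarrow> 'a) \<Rightarrow> nat \<Rightarrow> 'a set" where
  "Lser G H \<phi> 0 = carrier H"
| "Lser G H \<phi> (Suc 0) = carrier H"
| "Lser G H \<phi> (Suc (Suc n)) =
     generate H (twist_subgroup H \<phi> (lcs G (Suc n)) (carrier H)
               \<union> twist_subgroup H \<phi> (carrier G) (Lser G H \<phi> (Suc n))
               \<union> comm_subgroup H (carrier H) (Lser G H \<phi> (Suc n)))"

text \<open>The subgroups V_n (indexed from 1; index 0 junk):
  V_n = \<langle>\<tilde>H_n, [H, V_{n-1}]\<rangle>, \<tilde>H_n = twist over G and V_{n-1}.\<close>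
fun Vser :: "('b, 'd) monoid_scheme \<Rightarrow> ('a, 'c) monoid_scheme \<Rightarrow> ('b \<Rightarrow> 'a \<Rightarrow> 'a) \<Rightarrow> nat \<Rightarrow> 'a set" where
  "Vser G H \<phi> 0 = carrier H"
| "Vser G H \<phi> (Suc 0) = carrier H"
| "Vser G H \<phi> (Suc (Suc n)) =
     generate H (twist_subgroup H \<phi> (carrier G) (Vser G H \<phi> (Suc n))
               \<union> comm_subgroup H (carrier H) (Vser G H \<phi> (Suc n)))"

end

theory Submission
  imports Defs
begin


context group begin

lemma cancel1[simp]: "x \<in> carrier G \<Longrightarrow> y \<in> carrier G \<Longrightarrow> x \<otimes> (inv x \<otimes> y) = y"
  by (simp add: m_assoc[symmetric])
lemma cancel2[simp]: "x \<in> carrier G \<Longrightarrow> y \<in> carrier G \<Longrightarrow> inv x \<otimes> (x \<otimes> y) = y"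
  by (simp add: m_assoc[symmetric])

lemma comm_inv: "x \<in> carrier G \<Longrightarrow> y \<in> carrier G \<Longrightarrow>
   inv (x \<otimes> y \<otimes> inv x \<otimes> inv y) = y \<otimes> x \<otimes> inv y \<otimes> inv x"
  by (simp add: inv_mult_group m_assoc)

lemma conj_comm: "g \<in> carrier G \<Longrightarrow> a \<in> carrier G \<Longrightarrow> b \<in> carrier G \<Longrightarrow>
  g \<otimes> (a \<otimes> b \<otimes> inv a \<otimes> inv b) \<otimes> inv g =
  (g \<otimes> a \<otimes> inv g) \<otimes> (g \<otimes> b \<otimes> inv g) \<otimes> inv (g \<otimes> a \<otimes> inv g) \<otimes> inv (g \<otimes> b \<otimes> inv g)"
  by (simp add: inv_mult_group m_assoc)

lemma comm_closure1:
  assumes XX: "subgroup XX G" and N: "subgroup N G"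
    and Nc: "\<And>x n. x \<in> XX \<Longrightarrow> n \<in> N \<Longrightarrow> x \<otimes> n \<otimes> inv x \<in> N"
    and A: "A \<subseteq> XX" and b: "b \<in> XX"
    and AB: "\<And>a. a \<in> A \<Longrightarrow> a \<otimes> b \<otimes> inv a \<otimes> inv b \<in> N"
    and x: "x \<in> generate G A"
  shows "x \<otimes> b \<otimes> inv x \<otimes> inv b \<in> N"
  using x
proof (induction rule: generate.induct)
  case one
  have "b \<in> carrier G" using b subgroup.subset[OF XX] by auto
  then show ?case using subgroup.one_closed[OF N] by simp
next
  case (incl h) then show ?case by (rule AB)
next
  case (inv a)
  have ac: "a \<in> carrier G" "a \<in> XX" and bc: "b \<in> carrier G" using inv A b subgroup.subset[OF XX] by auto
  have "inv a \<in> XX" using subgroup.m_inv_closed[OF XX ac(2)] .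
  moreover have "inv (a \<otimes> b \<otimes> inv a \<otimes> inv b) \<in> N"
    using subgroup.m_inv_closed[OF N AB[OF inv]] .
  ultimately have "inv a \<otimes> inv (a \<otimes> b \<otimes> inv a \<otimes> inv b) \<otimes> inv (inv a) \<in> N" by (rule Nc)
  moreover have "inv a \<otimes> inv (a \<otimes> b \<otimes> inv a \<otimes> inv b) \<otimes> inv (inv a) = inv a \<otimes> b \<otimes> inv (inv a) \<otimes> inv b"
    using ac bc by (simp add: inv_mult_group m_assoc)
  ultimately show ?case by simp
next
  case (eng x y)
  have gX: "generate G A \<subseteq> XX" using generate_subgroup_incl[OF A XX] .
  have xc: "x \<in> XX" "x \<in> carrier G" and yc: "y \<in> carrier G" and bc: "b \<in> carrier G"
    using eng gX b subgroup.subset[OF XX] by auto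
  have "x \<otimes> (y \<otimes> b \<otimes> inv y \<otimes> inv b) \<otimes> inv x \<in> N" using Nc[OF xc(1) eng.IH(2)] .
  then have "x \<otimes> (y \<otimes> b \<otimes> inv y \<otimes> inv b) \<otimes> inv x \<otimes> (x \<otimes> b \<otimes> inv x \<otimes> inv b) \<in> N"
    using subgroup.m_closed[OF N _ eng.IH(1)] by blast
  moreover have "x \<otimes> (y \<otimes> b \<otimes> inv y \<otimes> inv b) \<otimes> inv x \<otimes> (x \<otimes> b \<otimes> inv x \<otimes> inv b)
     = x \<otimes> y \<otimes> b \<otimes> inv (x \<otimes> y) \<otimes> inv b"
    using xc yc bc by (simp add: inv_mult_group m_assoc)
  ultimately show ?case by simp
qed

lemma comm_closure2:
  assumes XX: "subgroup XX G" and N: "subgroup N G"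
    and Nc: "\<And>x n. x \<in> XX \<Longrightarrow> n \<in> N \<Longrightarrow> x \<otimes> n \<otimes> inv x \<in> N"
    and A: "A \<subseteq> XX" and B: "B \<subseteq> XX"
    and AB: "\<And>a b. a \<in> A \<Longrightarrow> b \<in> B \<Longrightarrow> a \<otimes> b \<otimes> inv a \<otimes> inv b \<in> N"
    and x: "x \<in> generate G A" and y: "y \<in> generate G B"
  shows "x \<otimes> y \<otimes> inv x \<otimes> inv y \<in> N"
proof -
  have gA: "generate G A \<subseteq> XX" using generate_subgroup_incl[OF A XX] .
  have gB: "generate G B \<subseteq> XX" using generate_subgroup_incl[OF B XX] .
  have XC: "XX \<subseteq> carrier G" using subgroup.subset[OF XX] .
  have 1: "x' \<otimes> b \<otimes> inv x' \<otimes> inv b \<in> N" if "b \<in> B" "x' \<in> generate G A" for b x'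
    using comm_closure1[OF XX N Nc A _ AB that(2)] that B by blast
  have 2: "b \<otimes> x \<otimes> inv b \<otimes> inv x \<in> N" if "b \<in> B" for b
  proof -
    have "inv (x \<otimes> b \<otimes> inv x \<otimes> inv b) \<in> N" using subgroup.m_inv_closed[OF N 1[OF that x]] .
    have "x \<in> carrier G" "b \<in> carrier G" using x gA XC that B by auto
    then show ?thesis using comm_inv[of x b] \<open>inv (x \<otimes> b \<otimes> inv x \<otimes> inv b) \<in> N\<close> by simp
  qed
  have "y \<otimes> x \<otimes> inv y \<otimes> inv x \<in> N"
    using comm_closure1[OF XX N Nc B _ 2 y] x gA by blast
  then have "inv (y \<otimes> x \<otimes> inv y \<otimes> inv x) \<in> N" using subgroup.m_inv_closed[OF N] by blast
  moreover have "x \<in> carrier G" "y \<in> carrier G" using x y gA gB XC by auto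
  ultimately show ?thesis using comm_inv[of y x] by simp
qed

lemma conj_set_subgroup:
  assumes N: "subgroup N G" and Y: "Y \<subseteq> carrier G"
  shows "subgroup {n \<in> N. \<forall>y\<in>Y. y \<otimes> n \<otimes> inv y \<in> N} G"
proof
  have NC: "N \<subseteq> carrier G" using subgroup.subset[OF N] .
  show "{n \<in> N. \<forall>y\<in>Y. y \<otimes> n \<otimes> inv y \<in> N} \<subseteq> carrier G" using NC by auto
  show "\<one> \<in> {n \<in> N. \<forall>y\<in>Y. y \<otimes> n \<otimes> inv y \<in> N}" using Y subgroup.one_closed[OF N] by auto
  fix a b assume a: "a \<in> {n \<in> N. \<forall>y\<in>Y. y \<otimes> n \<otimes> inv y \<in> N}" and b: "b \<in> {n \<in> N. \<forall>y\<in>Y. y \<otimes> n \<otimes> inv y \<in> N}"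
  show "a \<otimes> b \<in> {n \<in> N. \<forall>y\<in>Y. y \<otimes> n \<otimes> inv y \<in> N}"
  proof (intro CollectI conjI ballI)
    show "a \<otimes> b \<in> N" using a b subgroup.m_closed[OF N] by auto
    fix y assume y: "y \<in> Y"
    have "(y \<otimes> a \<otimes> inv y) \<otimes> (y \<otimes> b \<otimes> inv y) \<in> N" using a b y subgroup.m_closed[OF N] by auto
    moreover have "a \<in> carrier G" "b \<in> carrier G" "y \<in> carrier G" using a b y Y NC by auto
    then have "(y \<otimes> a \<otimes> inv y) \<otimes> (y \<otimes> b \<otimes> inv y) = y \<otimes> (a \<otimes> b) \<otimes> inv y"
      by (simp add: m_assoc)
    ultimately show "y \<otimes> (a \<otimes> b) \<otimes> inv y \<in> N" by simp
  qed
next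
  have NC: "N \<subseteq> carrier G" using subgroup.subset[OF N] .
  fix a assume a: "a \<in> {n \<in> N. \<forall>y\<in>Y. y \<otimes> n \<otimes> inv y \<in> N}"
  show "inv a \<in> {n \<in> N. \<forall>y\<in>Y. y \<otimes> n \<otimes> inv y \<in> N}"
  proof (intro CollectI conjI ballI)
    show "inv a \<in> N" using a subgroup.m_inv_closed[OF N] by auto
    fix y assume y: "y \<in> Y"
    have "inv (y \<otimes> a \<otimes> inv y) \<in> N" using a y subgroup.m_inv_closed[OF N] by auto
    moreover have "a \<in> carrier G" "y \<in> carrier G" using a y Y NC by auto
    then have "inv (y \<otimes> a \<otimes> inv y) = y \<otimes> inv a \<otimes> inv y"
      by (simp add: m_assoc inv_mult_group)
    ultimately show "y \<otimes> inv a \<otimes> inv y \<in> N" by simp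
  qed
qed

lemma vimage_subgroup:
  assumes K: "group K" and f: "f \<in> hom G K" and T: "subgroup T K"
  shows "subgroup {x \<in> carrier G. f x \<in> T} G"
proof -
  interpret K: group K by (rule K)
  interpret gh: group_hom G K f by (unfold_locales; rule f)
  show ?thesis
  proof
    show "{x \<in> carrier G. f x \<in> T} \<subseteq> carrier G" by auto
    show "\<one> \<in> {x \<in> carrier G. f x \<in> T}" using subgroup.one_closed[OF T] by simp
    fix a b assume "a \<in> {x \<in> carrier G. f x \<in> T}" "b \<in> {x \<in> carrier G. f x \<in> T}"
    then show "a \<otimes> b \<in> {x \<in> carrier G. f x \<in> T}" using subgroup.m_closed[OF T] by auto
  next
    fix a assume "a \<in> {x \<in> carrier G. f x \<in> T}"
    then show "inv a \<in> {x \<in> carrier G. f x \<in> T}" using subgroup.m_inv_closed[OF T] by auto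
  qed
qed

lemma lcs_facts: "subgroup (lcs G (Suc n)) G \<and> (\<forall>g\<in>carrier G. \<forall>a\<in>lcs G (Suc n). g \<otimes> a \<otimes> inv g \<in> lcs G (Suc n))"
proof (induction n)
  case 0 then show ?case by (simp add: subgroup_self)
next
  case (Suc n)
  let ?L = "lcs G (Suc n)" and ?L' = "lcs G (Suc (Suc n))"
  have LC: "?L \<subseteq> carrier G" using Suc subgroup.subset by blast
  have gens: "(\<Union>a \<in> ?L. \<Union>b \<in> carrier G. {a \<otimes> b \<otimes> inv a \<otimes> inv b}) \<subseteq> carrier G" using LC by auto
  have sub: "subgroup ?L' G" by (simp add: comm_subgroup_def generate_is_subgroup[OF gens])
  have "?L' \<subseteq> {n \<in> ?L'. \<forall>y\<in>carrier G. y \<otimes> n \<otimes> inv y \<in> ?L'}"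
    unfolding lcs.simps comm_subgroup_def
  proof (rule generate_subgroup_incl)
    show "subgroup {n \<in> generate G (\<Union>a \<in> ?L. \<Union>b \<in> carrier G. {a \<otimes> b \<otimes> inv a \<otimes> inv b}).
       \<forall>y\<in>carrier G. y \<otimes> n \<otimes> inv y \<in> generate G (\<Union>a \<in> ?L. \<Union>b \<in> carrier G. {a \<otimes> b \<otimes> inv a \<otimes> inv b})} G"
      using conj_set_subgroup[OF sub] by (simp add: comm_subgroup_def)
    show "(\<Union>a \<in> ?L. \<Union>b \<in> carrier G. {a \<otimes> b \<otimes> inv a \<otimes> inv b}) \<subseteq> {n \<in> generate G (\<Union>a \<in> ?L. \<Union>b \<in> carrier G. {a \<otimes> b \<otimes> inv a \<otimes> inv b}).
       \<forall>y\<in>carrier G. y \<otimes> n \<otimes> inv y \<in> generate G (\<Union>a \<in> ?L. \<Union>b \<in> carrier G. {a \<otimes> b \<otimes> inv a \<otimes> inv b})}"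
    proof (safe)
      fix a b assume a: "a \<in> ?L" and b: "b \<in> carrier G"
      show "a \<otimes> b \<otimes> inv a \<otimes> inv b \<in> generate G (\<Union>a \<in> ?L. \<Union>b \<in> carrier G. {a \<otimes> b \<otimes> inv a \<otimes> inv b})"
        using a b by (blast intro: generate.incl)
      fix y assume y: "y \<in> carrier G"
      have "y \<otimes> a \<otimes> inv y \<in> ?L" using Suc a y by blast
      moreover have "y \<otimes> b \<otimes> inv y \<in> carrier G" using y b by simp
      ultimately have "(y \<otimes> a \<otimes> inv y) \<otimes> (y \<otimes> b \<otimes> inv y) \<otimes> inv (y \<otimes> a \<otimes> inv y) \<otimes> inv (y \<otimes> b \<otimes> inv y)
         \<in> generate G (\<Union>a \<in> ?L. \<Union>b \<in> carrier G. {a \<otimes> b \<otimes> inv a \<otimes> inv b})"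
        by (blast intro: generate.incl)
      then show "y \<otimes> (a \<otimes> b \<otimes> inv a \<otimes> inv b) \<otimes> inv y
         \<in> generate G (\<Union>a \<in> ?L. \<Union>b \<in> carrier G. {a \<otimes> b \<otimes> inv a \<otimes> inv b})"
        using conj_comm[of y a b] a b y LC by auto
    qed
  qed
  then show ?case using sub by blast
qed

lemma lcs_mono: "lcs G (Suc (Suc n)) \<subseteq> lcs G (Suc n)"
proof -
  let ?L = "lcs G (Suc n)"
  have S: "subgroup ?L G" using lcs_facts by blast
  have LC: "?L \<subseteq> carrier G" using S subgroup.subset by blast
  show ?thesis unfolding lcs.simps comm_subgroup_def
  proof (rule generate_subgroup_incl[OF _ S], safe)
    fix a b assume a: "a \<in> ?L" and b: "b \<in> carrier G"
    have "b \<otimes> inv a \<otimes> inv b \<in> ?L" using lcs_facts b subgroup.m_inv_closed[OF S a] by blast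
    then have "a \<otimes> (b \<otimes> inv a \<otimes> inv b) \<in> ?L" using subgroup.m_closed[OF S a] by blast
    moreover have "a \<in> carrier G" using a LC by auto
    ultimately show "a \<otimes> b \<otimes> inv a \<otimes> inv b \<in> ?L" using b by (simp add: m_assoc)
  qed
qed

lemma derived_series_normal: "derived_series G k \<lhd> G"
proof (induction k)
  case 0 then show ?case by (simp add: derived_series_def normal_self)
next
  case (Suc k) then show ?case by (simp add: derived_series_def derived_is_normal)
qed

end


locale sdp = G: group G + H: group H
  for G :: "('b,'d) monoid_scheme" and H :: "('a,'c) monoid_scheme" and \<phi> :: "'b \<Rightarrow> 'a \<Rightarrow> 'a"
  + assumes phi: "\<phi> \<in> hom G (AutoGroup H)"
begin

lemma phi_auto: "g \<in> carrier G \<Longrightarrow> \<phi> g \<in> auto H"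
  using phi by (auto simp: hom_def AutoGroup_def)

lemma phi_hom: "g \<in> carrier G \<Longrightarrow> \<phi> g \<in> hom H H"
  using phi_auto by (auto simp: auto_def)

lemma phi_gh: "g \<in> carrier G \<Longrightarrow> group_hom H H (\<phi> g)"
  by (unfold_locales; rule phi_hom)

lemma phi_closed[simp]: "g \<in> carrier G \<Longrightarrow> h \<in> carrier H \<Longrightarrow> \<phi> g h \<in> carrier H"
  by (rule hom_in_carrier[OF phi_hom])

lemma phi_mult[simp]: "g \<in> carrier G \<Longrightarrow> h \<in> carrier H \<Longrightarrow> k \<in> carrier H \<Longrightarrow>
   \<phi> g (h \<otimes>\<^bsub>H\<^esub> k) = \<phi> g h \<otimes>\<^bsub>H\<^esub> \<phi> g k"
  by (rule hom_mult[OF phi_hom])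

lemma phi_one[simp]: "g \<in> carrier G \<Longrightarrow> \<phi> g \<one>\<^bsub>H\<^esub> = \<one>\<^bsub>H\<^esub>"
  by (rule group_hom.hom_one[OF phi_gh])

lemma phi_inv[simp]: "g \<in> carrier G \<Longrightarrow> h \<in> carrier H \<Longrightarrow> \<phi> g (inv\<^bsub>H\<^esub> h) = inv\<^bsub>H\<^esub> (\<phi> g h)"
  by (rule group_hom.hom_inv[OF phi_gh])

lemma phi_comp[simp]: "g \<in> carrier G \<Longrightarrow> g' \<in> carrier G \<Longrightarrow> h \<in> carrier H \<Longrightarrow>
   \<phi> (g \<otimes>\<^bsub>G\<^esub> g') h = \<phi> g (\<phi> g' h)"
proof -
  assume a: "g \<in> carrier G" "g' \<in> carrier G" "h \<in> carrier H"
  have "\<phi> (g \<otimes>\<^bsub>G\<^esub> g') = \<phi> g \<otimes>\<^bsub>AutoGroup H\<^esub> \<phi> g'"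
    by (rule hom_mult[OF phi a(1,2)])
  moreover have "\<phi> g \<in> Bij (carrier H)" "\<phi> g' \<in> Bij (carrier H)" using phi_auto a by (auto simp: auto_def)
  ultimately show ?thesis using a by (simp add: AutoGroup_def BijGroup_def compose_def)
qed

lemma phi_id[simp]: "h \<in> carrier H \<Longrightarrow> \<phi> \<one>\<^bsub>G\<^esub> h = h"
proof -
  interpret gh: group_hom G "AutoGroup H" \<phi>
    unfolding group_hom_def group_hom_axioms_def using G.group_axioms H.AutoGroup phi by auto
  assume h: "h \<in> carrier H"
  have "\<phi> \<one>\<^bsub>G\<^esub> = \<one>\<^bsub>AutoGroup H\<^esub>" by simp
  then show ?thesis using h by (simp add: AutoGroup_def BijGroup_def)
qed

lemma phi_cancel[simp]: "g \<in> carrier G \<Longrightarrow> h \<in> carrier H \<Longrightarrow> \<phi> (inv\<^bsub>G\<^esub> g) (\<phi> g h) = h"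
  using phi_comp[of "inv\<^bsub>G\<^esub> g" g h] by simp

lemma phi_cancel2[simp]: "g \<in> carrier G \<Longrightarrow> h \<in> carrier H \<Longrightarrow> \<phi> g (\<phi> (inv\<^bsub>G\<^esub> g) h) = h"
  using phi_comp[of g "inv\<^bsub>G\<^esub> g" h] by simp

abbreviation P where "P \<equiv> semidirect H G \<phi>"

lemma carrier_P[simp]: "carrier P = carrier H \<times> carrier G"
  by (simp add: semidirect_def)
lemma mult_P[simp]: "(h, g) \<otimes>\<^bsub>P\<^esub> (h', g') = (h \<otimes>\<^bsub>H\<^esub> \<phi> g h', g \<otimes>\<^bsub>G\<^esub> g')"
  by (simp add: semidirect_def)
lemma one_P[simp]: "\<one>\<^bsub>P\<^esub> = (\<one>\<^bsub>H\<^esub>, \<one>\<^bsub>G\<^esub>)"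
  by (simp add: semidirect_def)

lemma group_P: "group P"
proof (rule groupI)
  fix x y assume "x \<in> carrier P" "y \<in> carrier P"
  then show "x \<otimes>\<^bsub>P\<^esub> y \<in> carrier P" by (cases x; cases y) simp
next
  show "\<one>\<^bsub>P\<^esub> \<in> carrier P" by simp
next
  fix x y z assume "x \<in> carrier P" "y \<in> carrier P" "z \<in> carrier P"
  then obtain a b c d e f where xyz: "x = (a,b)" "y = (c,d)" "z = (e,f)"
    and m: "a \<in> carrier H" "b \<in> carrier G" "c \<in> carrier H" "d \<in> carrier G" "e \<in> carrier H" "f \<in> carrier G"
    by (cases x; cases y; cases z) auto
  then show "x \<otimes>\<^bsub>P\<^esub> y \<otimes>\<^bsub>P\<^esub> z = x \<otimes>\<^bsub>P\<^esub> (y \<otimes>\<^bsub>P\<^esub> z)"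
    by (simp add: H.m_assoc G.m_assoc)
next
  fix x assume "x \<in> carrier P"
  then show "\<one>\<^bsub>P\<^esub> \<otimes>\<^bsub>P\<^esub> x = x" by (cases x) simp
next
  fix x assume x: "x \<in> carrier P"
  obtain h g where hg: "x = (h, g)" "h \<in> carrier H" "g \<in> carrier G" using x by (cases x) auto
  show "\<exists>y\<in>carrier P. y \<otimes>\<^bsub>P\<^esub> x = \<one>\<^bsub>P\<^esub>"
  proof (rule bexI[of _ "(\<phi> (inv\<^bsub>G\<^esub> g) (inv\<^bsub>H\<^esub> h), inv\<^bsub>G\<^esub> g)"])
    show "(\<phi> (inv\<^bsub>G\<^esub> g) (inv\<^bsub>H\<^esub> h), inv\<^bsub>G\<^esub> g) \<otimes>\<^bsub>P\<^esub> x = \<one>\<^bsub>P\<^esub>"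
      using hg by (simp flip: phi_mult)
    show "(\<phi> (inv\<^bsub>G\<^esub> g) (inv\<^bsub>H\<^esub> h), inv\<^bsub>G\<^esub> g) \<in> carrier P" using hg by simp
  qed
qed

lemma inv_P[simp]: "h \<in> carrier H \<Longrightarrow> g \<in> carrier G \<Longrightarrow>
   inv\<^bsub>P\<^esub> (h, g) = (\<phi> (inv\<^bsub>G\<^esub> g) (inv\<^bsub>H\<^esub> h), inv\<^bsub>G\<^esub> g)"
  by (rule group.inv_equality[OF group_P]) auto

lemma comm_ii: "l \<in> carrier H \<Longrightarrow> h \<in> carrier H \<Longrightarrow>
  (l, \<one>\<^bsub>G\<^esub>) \<otimes>\<^bsub>P\<^esub> (h, \<one>\<^bsub>G\<^esub>) \<otimes>\<^bsub>P\<^esub> inv\<^bsub>P\<^esub> (l, \<one>\<^bsub>G\<^esub>) \<otimes>\<^bsub>P\<^esub> inv\<^bsub>P\<^esub> (h, \<one>\<^bsub>G\<^esub>)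
   = (l \<otimes>\<^bsub>H\<^esub> h \<otimes>\<^bsub>H\<^esub> inv\<^bsub>H\<^esub> l \<otimes>\<^bsub>H\<^esub> inv\<^bsub>H\<^esub> h, \<one>\<^bsub>G\<^esub>)"
  by simp

lemma comm_ik: "l \<in> carrier H \<Longrightarrow> g \<in> carrier G \<Longrightarrow>
  (l, \<one>\<^bsub>G\<^esub>) \<otimes>\<^bsub>P\<^esub> (\<one>\<^bsub>H\<^esub>, g) \<otimes>\<^bsub>P\<^esub> inv\<^bsub>P\<^esub> (l, \<one>\<^bsub>G\<^esub>) \<otimes>\<^bsub>P\<^esub> inv\<^bsub>P\<^esub> (\<one>\<^bsub>H\<^esub>, g)
   = (inv\<^bsub>H\<^esub> (\<phi> g l \<otimes>\<^bsub>H\<^esub> inv\<^bsub>H\<^esub> l), \<one>\<^bsub>G\<^esub>)"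
  by (simp add: H.inv_mult_group)

lemma comm_ki: "c \<in> carrier G \<Longrightarrow> h \<in> carrier H \<Longrightarrow>
  (\<one>\<^bsub>H\<^esub>, c) \<otimes>\<^bsub>P\<^esub> (h, \<one>\<^bsub>G\<^esub>) \<otimes>\<^bsub>P\<^esub> inv\<^bsub>P\<^esub> (\<one>\<^bsub>H\<^esub>, c) \<otimes>\<^bsub>P\<^esub> inv\<^bsub>P\<^esub> (h, \<one>\<^bsub>G\<^esub>)
   = (\<phi> c h \<otimes>\<^bsub>H\<^esub> inv\<^bsub>H\<^esub> h, \<one>\<^bsub>G\<^esub>)"
  by simp

lemma comm_kk: "c \<in> carrier G \<Longrightarrow> g \<in> carrier G \<Longrightarrow>
  (\<one>\<^bsub>H\<^esub>, c) \<otimes>\<^bsub>P\<^esub> (\<one>\<^bsub>H\<^esub>, g) \<otimes>\<^bsub>P\<^esub> inv\<^bsub>P\<^esub> (\<one>\<^bsub>H\<^esub>, c) \<otimes>\<^bsub>P\<^esub> inv\<^bsub>P\<^esub> (\<one>\<^bsub>H\<^esub>, g)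
   = (\<one>\<^bsub>H\<^esub>, c \<otimes>\<^bsub>G\<^esub> g \<otimes>\<^bsub>G\<^esub> inv\<^bsub>G\<^esub> c \<otimes>\<^bsub>G\<^esub> inv\<^bsub>G\<^esub> g)"
  by simp

lemma conj_P: "h \<in> carrier H \<Longrightarrow> g \<in> carrier G \<Longrightarrow> l \<in> carrier H \<Longrightarrow> c \<in> carrier G \<Longrightarrow>
  (h, g) \<otimes>\<^bsub>P\<^esub> (l, c) \<otimes>\<^bsub>P\<^esub> inv\<^bsub>P\<^esub> (h, g)
  = ((h \<otimes>\<^bsub>H\<^esub> \<phi> g l \<otimes>\<^bsub>H\<^esub> inv\<^bsub>H\<^esub> h) \<otimes>\<^bsub>H\<^esub>
      inv\<^bsub>H\<^esub> (\<phi> (g \<otimes>\<^bsub>G\<^esub> c \<otimes>\<^bsub>G\<^esub> inv\<^bsub>G\<^esub> g) h \<otimes>\<^bsub>H\<^esub> inv\<^bsub>H\<^esub> h),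
     g \<otimes>\<^bsub>G\<^esub> c \<otimes>\<^bsub>G\<^esub> inv\<^bsub>G\<^esub> g)"
  by (simp add: H.inv_mult_group H.m_assoc G.m_assoc)

lemma product_subgroup:
  assumes A: "subgroup A H" and B: "subgroup B G" and inv: "\<And>b a. b \<in> B \<Longrightarrow> a \<in> A \<Longrightarrow> \<phi> b a \<in> A"
  shows "subgroup (A \<times> B) P"
proof
  have AC: "A \<subseteq> carrier H" and BC: "B \<subseteq> carrier G" using A B subgroup.subset by blast+
  show "A \<times> B \<subseteq> carrier P" using AC BC by auto
  show "\<one>\<^bsub>P\<^esub> \<in> A \<times> B" using subgroup.one_closed[OF A] subgroup.one_closed[OF B] by simp
  fix x y assume "x \<in> A \<times> B" "y \<in> A \<times> B"
  then show "x \<otimes>\<^bsub>P\<^esub> y \<in> A \<times> B" using inv subgroup.m_closed[OF A] subgroup.m_closed[OF B]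
    by (cases x; cases y) auto
next
  have AC: "A \<subseteq> carrier H" and BC: "B \<subseteq> carrier G" using A B subgroup.subset by blast+
  fix x assume "x \<in> A \<times> B"
  then obtain a b where x: "x = (a, b)" "a \<in> A" "b \<in> B" by auto
  moreover have "a \<in> carrier H" "b \<in> carrier G" using x AC BC by auto
  ultimately show "inv\<^bsub>P\<^esub> x \<in> A \<times> B" using inv subgroup.m_inv_closed[OF A] subgroup.m_inv_closed[OF B]
    by simp
qed

lemma prod_gen: "A \<times> B \<subseteq> generate P ((\<lambda>a. (a, \<one>\<^bsub>G\<^esub>)) ` A \<union> (\<lambda>b. (\<one>\<^bsub>H\<^esub>, b)) ` B)"
  if "A \<subseteq> carrier H" "B \<subseteq> carrier G"
proof safe
  fix a b assume ab: "a \<in> A" "b \<in> B"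
  then have "(a, \<one>\<^bsub>G\<^esub>) \<otimes>\<^bsub>P\<^esub> (\<one>\<^bsub>H\<^esub>, b) \<in> generate P ((\<lambda>a. (a, \<one>\<^bsub>G\<^esub>)) ` A \<union> (\<lambda>b. (\<one>\<^bsub>H\<^esub>, b)) ` B)"
    by (blast intro: generate.eng generate.incl)
  moreover have "a \<in> carrier H" "b \<in> carrier G" using ab that by auto
  ultimately show "(a, b) \<in> generate P ((\<lambda>a. (a, \<one>\<^bsub>G\<^esub>)) ` A \<union> (\<lambda>b. (\<one>\<^bsub>H\<^esub>, b)) ` B)"
    by simp
qed

lemma iota_hom: "(\<lambda>a. (a, \<one>\<^bsub>G\<^esub>)) \<in> hom H P"
  by (rule homI) auto
lemma kappa_hom: "(\<lambda>b. (\<one>\<^bsub>H\<^esub>, b)) \<in> hom G P"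
  by (rule homI) auto

end


context sdp begin

lemma twist_carrier: "A \<subseteq> carrier G \<Longrightarrow> B \<subseteq> carrier H \<Longrightarrow> twist_subgroup H \<phi> A B \<subseteq> carrier H"
  unfolding twist_subgroup_def
  by (rule subgroup.subset, rule H.generate_is_subgroup) (blast intro: H.m_closed H.inv_closed phi_closed)

lemma comm_carrier: "A \<subseteq> carrier H \<Longrightarrow> B \<subseteq> carrier H \<Longrightarrow> comm_subgroup H A B \<subseteq> carrier H"
  unfolding comm_subgroup_def
  by (rule subgroup.subset, rule H.generate_is_subgroup) (blast intro: H.m_closed H.inv_closed)

lemma twist_le: "subgroup S H \<Longrightarrow> (\<And>g h. g \<in> A \<Longrightarrow> h \<in> B \<Longrightarrow> \<phi> g h \<otimes>\<^bsub>H\<^esub> inv\<^bsub>H\<^esub> h \<in> S)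
   \<Longrightarrow> twist_subgroup H \<phi> A B \<subseteq> S"
  unfolding twist_subgroup_def by (rule H.generate_subgroup_incl) auto

lemma comm_le: "subgroup S H \<Longrightarrow> (\<And>a b. a \<in> A \<Longrightarrow> b \<in> B \<Longrightarrow> a \<otimes>\<^bsub>H\<^esub> b \<otimes>\<^bsub>H\<^esub> inv\<^bsub>H\<^esub> a \<otimes>\<^bsub>H\<^esub> inv\<^bsub>H\<^esub> b \<in> S)
   \<Longrightarrow> comm_subgroup H A B \<subseteq> S"
  unfolding comm_subgroup_def by (rule H.generate_subgroup_incl) auto

lemma twist_mem: "g \<in> A \<Longrightarrow> h \<in> B \<Longrightarrow> \<phi> g h \<otimes>\<^bsub>H\<^esub> inv\<^bsub>H\<^esub> h \<in> twist_subgroup H \<phi> A B"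
  unfolding twist_subgroup_def by (rule generate.incl) auto

lemma comm_mem: "a \<in> A \<Longrightarrow> b \<in> B \<Longrightarrow> a \<otimes>\<^bsub>H\<^esub> b \<otimes>\<^bsub>H\<^esub> inv\<^bsub>H\<^esub> a \<otimes>\<^bsub>H\<^esub> inv\<^bsub>H\<^esub> b \<in> comm_subgroup H A B"
  unfolding comm_subgroup_def by (rule generate.incl) auto

lemma conj_via_comm: "a \<in> carrier H \<Longrightarrow> h \<in> carrier H \<Longrightarrow>
  h \<otimes>\<^bsub>H\<^esub> a \<otimes>\<^bsub>H\<^esub> inv\<^bsub>H\<^esub> h = (h \<otimes>\<^bsub>H\<^esub> a \<otimes>\<^bsub>H\<^esub> inv\<^bsub>H\<^esub> h \<otimes>\<^bsub>H\<^esub> inv\<^bsub>H\<^esub> a) \<otimes>\<^bsub>H\<^esub> a"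
  by (simp add: H.m_assoc)

lemma Lfacts: "subgroup (Lser G H \<phi> (Suc n)) H
   \<and> (\<forall>x\<in>carrier G. \<forall>l\<in>Lser G H \<phi> (Suc n). \<phi> x l \<in> Lser G H \<phi> (Suc n))
   \<and> (\<forall>h\<in>carrier H. \<forall>l\<in>Lser G H \<phi> (Suc n). h \<otimes>\<^bsub>H\<^esub> l \<otimes>\<^bsub>H\<^esub> inv\<^bsub>H\<^esub> h \<in> Lser G H \<phi> (Suc n))"
proof (induction n)
  case 0
  show ?case by (simp add: H.subgroup_self)
next
  case (Suc n)
  define L where "L = Lser G H \<phi> (Suc n)"
  define \<Gamma> where "\<Gamma> = lcs G (Suc n)"
  define T1 where "T1 = twist_subgroup H \<phi> \<Gamma> (carrier H)"
  define T2 where "T2 = twist_subgroup H \<phi> (carrier G) L"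
  define C where "C = comm_subgroup H (carrier H) L"
  have L': "Lser G H \<phi> (Suc (Suc n)) = generate H (T1 \<union> T2 \<union> C)"
    by (simp add: L_def \<Gamma>_def T1_def T2_def C_def)
  define L' where "L' = generate H (T1 \<union> T2 \<union> C)"
  have Lsub: "subgroup L H" and Linv: "\<And>x l. x \<in> carrier G \<Longrightarrow> l \<in> L \<Longrightarrow> \<phi> x l \<in> L"
    and Lnorm: "\<And>h l. h \<in> carrier H \<Longrightarrow> l \<in> L \<Longrightarrow> h \<otimes>\<^bsub>H\<^esub> l \<otimes>\<^bsub>H\<^esub> inv\<^bsub>H\<^esub> h \<in> L"
    using Suc unfolding L_def by auto
  have LC: "L \<subseteq> carrier H" using Lsub subgroup.subset by blast
  have \<Gamma>sub: "subgroup \<Gamma> G" and \<Gamma>n: "\<And>g a. g \<in> carrier G \<Longrightarrow> a \<in> \<Gamma> \<Longrightarrow> g \<otimes>\<^bsub>G\<^esub> a \<otimes>\<^bsub>G\<^esub> inv\<^bsub>G\<^esub> g \<in> \<Gamma>"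
    using G.lcs_facts unfolding \<Gamma>_def by auto
  have \<Gamma>C: "\<Gamma> \<subseteq> carrier G" using \<Gamma>sub subgroup.subset by blast
  have T1C: "T1 \<subseteq> carrier H" unfolding T1_def using twist_carrier \<Gamma>C by blast
  have T2C: "T2 \<subseteq> carrier H" unfolding T2_def using twist_carrier LC by blast
  have CC: "C \<subseteq> carrier H" unfolding C_def using comm_carrier LC by blast
  have L'sub: "subgroup L' H" unfolding L'_def using T1C T2C CC by (intro H.generate_is_subgroup) auto
  have L'C: "L' \<subseteq> carrier H" using L'sub subgroup.subset by blast
  have m1: "\<And>g h. g \<in> \<Gamma> \<Longrightarrow> h \<in> carrier H \<Longrightarrow> \<phi> g h \<otimes>\<^bsub>H\<^esub> inv\<^bsub>H\<^esub> h \<in> L'"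
    unfolding L'_def T1_def by (rule generate.incl) (auto intro: twist_mem)
  have m2: "\<And>g l. g \<in> carrier G \<Longrightarrow> l \<in> L \<Longrightarrow> \<phi> g l \<otimes>\<^bsub>H\<^esub> inv\<^bsub>H\<^esub> l \<in> L'"
    unfolding L'_def T2_def by (rule generate.incl) (auto intro: twist_mem)
  have m3: "\<And>h l. h \<in> carrier H \<Longrightarrow> l \<in> L \<Longrightarrow> h \<otimes>\<^bsub>H\<^esub> l \<otimes>\<^bsub>H\<^esub> inv\<^bsub>H\<^esub> h \<otimes>\<^bsub>H\<^esub> inv\<^bsub>H\<^esub> l \<in> L'"
    unfolding L'_def C_def by (rule generate.incl) (auto intro: comm_mem)
  have L'le: "L' \<subseteq> S" if S: "subgroup S H"
     and c1: "\<And>g h. g \<in> \<Gamma> \<Longrightarrow> h \<in> carrier H \<Longrightarrow> \<phi> g h \<otimes>\<^bsub>H\<^esub> inv\<^bsub>H\<^esub> h \<in> S"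
     and c2: "\<And>g l. g \<in> carrier G \<Longrightarrow> l \<in> L \<Longrightarrow> \<phi> g l \<otimes>\<^bsub>H\<^esub> inv\<^bsub>H\<^esub> l \<in> S"
     and c3: "\<And>h l. h \<in> carrier H \<Longrightarrow> l \<in> L \<Longrightarrow> h \<otimes>\<^bsub>H\<^esub> l \<otimes>\<^bsub>H\<^esub> inv\<^bsub>H\<^esub> h \<otimes>\<^bsub>H\<^esub> inv\<^bsub>H\<^esub> l \<in> S" for S
  proof -
    have "T1 \<subseteq> S" unfolding T1_def using twist_le[OF S] c1 by blast
    moreover have "T2 \<subseteq> S" unfolding T2_def using twist_le[OF S] c2 by blast
    moreover have "C \<subseteq> S" unfolding C_def using comm_le[OF S] c3 by blast
    ultimately show ?thesis unfolding L'_def by (intro H.generate_subgroup_incl[OF _ S]) auto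
  qed
  have inv': "\<phi> x l \<in> L'" if x: "x \<in> carrier G" and l: "l \<in> L'" for x l
  proof -
    have S: "subgroup {l \<in> carrier H. \<phi> x l \<in> L'} H"
      by (rule H.vimage_subgroup[OF H.group_axioms phi_hom[OF x] L'sub])
    have "L' \<subseteq> {l \<in> carrier H. \<phi> x l \<in> L'}"
    proof (rule L'le[OF S])
      fix g h assume g: "g \<in> \<Gamma>" and h: "h \<in> carrier H"
      have gc: "g \<in> carrier G" using g \<Gamma>C by auto
      have "\<phi> x (\<phi> g h \<otimes>\<^bsub>H\<^esub> inv\<^bsub>H\<^esub> h) = \<phi> (x \<otimes>\<^bsub>G\<^esub> g \<otimes>\<^bsub>G\<^esub> inv\<^bsub>G\<^esub> x) (\<phi> x h) \<otimes>\<^bsub>H\<^esub> inv\<^bsub>H\<^esub> (\<phi> x h)"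
        using x gc h by simp
      moreover have "\<phi> (x \<otimes>\<^bsub>G\<^esub> g \<otimes>\<^bsub>G\<^esub> inv\<^bsub>G\<^esub> x) (\<phi> x h) \<otimes>\<^bsub>H\<^esub> inv\<^bsub>H\<^esub> (\<phi> x h) \<in> L'"
        using m1 \<Gamma>n[OF x g] x h by simp
      ultimately show "\<phi> g h \<otimes>\<^bsub>H\<^esub> inv\<^bsub>H\<^esub> h \<in> {l \<in> carrier H. \<phi> x l \<in> L'}" using gc h by simp
    next
      fix g l assume g: "g \<in> carrier G" and l: "l \<in> L"
      have lc: "l \<in> carrier H" using l LC by auto
      have "\<phi> x (\<phi> g l \<otimes>\<^bsub>H\<^esub> inv\<^bsub>H\<^esub> l) = (\<phi> (x \<otimes>\<^bsub>G\<^esub> g) l \<otimes>\<^bsub>H\<^esub> inv\<^bsub>H\<^esub> l) \<otimes>\<^bsub>H\<^esub> inv\<^bsub>H\<^esub> (\<phi> x l \<otimes>\<^bsub>H\<^esub> inv\<^bsub>H\<^esub> l)"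
        using x g lc by (simp add: H.inv_mult_group H.m_assoc)
      moreover have "(\<phi> (x \<otimes>\<^bsub>G\<^esub> g) l \<otimes>\<^bsub>H\<^esub> inv\<^bsub>H\<^esub> l) \<otimes>\<^bsub>H\<^esub> inv\<^bsub>H\<^esub> (\<phi> x l \<otimes>\<^bsub>H\<^esub> inv\<^bsub>H\<^esub> l) \<in> L'"
        using m2[OF _ l] x g subgroup.m_closed[OF L'sub] subgroup.m_inv_closed[OF L'sub] by simp
      ultimately show "\<phi> g l \<otimes>\<^bsub>H\<^esub> inv\<^bsub>H\<^esub> l \<in> {l \<in> carrier H. \<phi> x l \<in> L'}" using g lc by simp
    next
      fix h l assume h: "h \<in> carrier H" and l: "l \<in> L"
      have lc: "l \<in> carrier H" using l LC by auto
      have "\<phi> x h \<otimes>\<^bsub>H\<^esub> \<phi> x l \<otimes>\<^bsub>H\<^esub> inv\<^bsub>H\<^esub> (\<phi> x h) \<otimes>\<^bsub>H\<^esub> inv\<^bsub>H\<^esub> (\<phi> x l) \<in> L'"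
        using m3 x h Linv[OF x l] by simp
      then show "h \<otimes>\<^bsub>H\<^esub> l \<otimes>\<^bsub>H\<^esub> inv\<^bsub>H\<^esub> h \<otimes>\<^bsub>H\<^esub> inv\<^bsub>H\<^esub> l \<in> {l \<in> carrier H. \<phi> x l \<in> L'}" using x h lc by simp
    qed
    then show ?thesis using l by blast
  qed
  have cL: "h \<otimes>\<^bsub>H\<^esub> a \<otimes>\<^bsub>H\<^esub> inv\<^bsub>H\<^esub> h \<in> L'" if "a \<in> L" "a \<in> L'" "h \<in> carrier H" for a h
  proof -
    have "a \<in> carrier H" using that LC by auto
    moreover have "(h \<otimes>\<^bsub>H\<^esub> a \<otimes>\<^bsub>H\<^esub> inv\<^bsub>H\<^esub> h \<otimes>\<^bsub>H\<^esub> inv\<^bsub>H\<^esub> a) \<otimes>\<^bsub>H\<^esub> a \<in> L'"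
      using m3[OF that(3,1)] subgroup.m_closed[OF L'sub _ that(2)] by blast
    ultimately show ?thesis using conj_via_comm[of a h] that(3) by simp
  qed
  have norm': "h \<otimes>\<^bsub>H\<^esub> l \<otimes>\<^bsub>H\<^esub> inv\<^bsub>H\<^esub> h \<in> L'" if h: "h \<in> carrier H" and l: "l \<in> L'" for h l
  proof -
    have S: "subgroup {n \<in> L'. \<forall>y\<in>carrier H. y \<otimes>\<^bsub>H\<^esub> n \<otimes>\<^bsub>H\<^esub> inv\<^bsub>H\<^esub> y \<in> L'} H"
      by (rule H.conj_set_subgroup[OF L'sub]) simp
    have "L' \<subseteq> {n \<in> L'. \<forall>y\<in>carrier H. y \<otimes>\<^bsub>H\<^esub> n \<otimes>\<^bsub>H\<^esub> inv\<^bsub>H\<^esub> y \<in> L'}"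
    proof (rule L'le[OF S])
      fix g k assume g: "g \<in> \<Gamma>" and k: "k \<in> carrier H"
      have gc: "g \<in> carrier G" using g \<Gamma>C by auto
      show "\<phi> g k \<otimes>\<^bsub>H\<^esub> inv\<^bsub>H\<^esub> k \<in> {n \<in> L'. \<forall>y\<in>carrier H. y \<otimes>\<^bsub>H\<^esub> n \<otimes>\<^bsub>H\<^esub> inv\<^bsub>H\<^esub> y \<in> L'}"
      proof (intro CollectI conjI ballI)
        show "\<phi> g k \<otimes>\<^bsub>H\<^esub> inv\<^bsub>H\<^esub> k \<in> L'" using m1 g k by blast
        fix y assume y: "y \<in> carrier H"
        have "y \<otimes>\<^bsub>H\<^esub> (\<phi> g k \<otimes>\<^bsub>H\<^esub> inv\<^bsub>H\<^esub> k) \<otimes>\<^bsub>H\<^esub> inv\<^bsub>H\<^esub> y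
           = inv\<^bsub>H\<^esub> (\<phi> g y \<otimes>\<^bsub>H\<^esub> inv\<^bsub>H\<^esub> y) \<otimes>\<^bsub>H\<^esub> (\<phi> g (y \<otimes>\<^bsub>H\<^esub> k) \<otimes>\<^bsub>H\<^esub> inv\<^bsub>H\<^esub> (y \<otimes>\<^bsub>H\<^esub> k))"
          using y k gc by (simp add: H.inv_mult_group H.m_assoc)
        moreover have "inv\<^bsub>H\<^esub> (\<phi> g y \<otimes>\<^bsub>H\<^esub> inv\<^bsub>H\<^esub> y) \<otimes>\<^bsub>H\<^esub> (\<phi> g (y \<otimes>\<^bsub>H\<^esub> k) \<otimes>\<^bsub>H\<^esub> inv\<^bsub>H\<^esub> (y \<otimes>\<^bsub>H\<^esub> k)) \<in> L'"
          using m1[OF g y] m1[OF g, of "y \<otimes>\<^bsub>H\<^esub> k"] y k subgroup.m_closed[OF L'sub] subgroup.m_inv_closed[OF L'sub]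
          by simp
        ultimately show "y \<otimes>\<^bsub>H\<^esub> (\<phi> g k \<otimes>\<^bsub>H\<^esub> inv\<^bsub>H\<^esub> k) \<otimes>\<^bsub>H\<^esub> inv\<^bsub>H\<^esub> y \<in> L'" by simp
      qed
    next
      fix g l assume g: "g \<in> carrier G" and l: "l \<in> L"
      have "\<phi> g l \<otimes>\<^bsub>H\<^esub> inv\<^bsub>H\<^esub> l \<in> L" using Linv[OF g l] l subgroup.m_closed[OF Lsub] subgroup.m_inv_closed[OF Lsub] by blast
      then show "\<phi> g l \<otimes>\<^bsub>H\<^esub> inv\<^bsub>H\<^esub> l \<in> {n \<in> L'. \<forall>y\<in>carrier H. y \<otimes>\<^bsub>H\<^esub> n \<otimes>\<^bsub>H\<^esub> inv\<^bsub>H\<^esub> y \<in> L'}"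
        using cL m2[OF g l] by blast
    next
      fix k l assume k: "k \<in> carrier H" and l: "l \<in> L"
      have lc: "l \<in> carrier H" using l LC by auto
      have "(k \<otimes>\<^bsub>H\<^esub> l \<otimes>\<^bsub>H\<^esub> inv\<^bsub>H\<^esub> k) \<otimes>\<^bsub>H\<^esub> inv\<^bsub>H\<^esub> l \<in> L" using Lnorm[OF k l] l subgroup.m_closed[OF Lsub] subgroup.m_inv_closed[OF Lsub] by blast
      then have "k \<otimes>\<^bsub>H\<^esub> l \<otimes>\<^bsub>H\<^esub> inv\<^bsub>H\<^esub> k \<otimes>\<^bsub>H\<^esub> inv\<^bsub>H\<^esub> l \<in> L" by simp
      then show "k \<otimes>\<^bsub>H\<^esub> l \<otimes>\<^bsub>H\<^esub> inv\<^bsub>H\<^esub> k \<otimes>\<^bsub>H\<^esub> inv\<^bsub>H\<^esub> l \<in> {n \<in> L'. \<forall>y\<in>carrier H. y \<otimes>\<^bsub>H\<^esub> n \<otimes>\<^bsub>H\<^esub> inv\<^bsub>H\<^esub> y \<in> L'}"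
        using cL m3[OF k l] by blast
    qed
    then show ?thesis using h l by blast
  qed
  show ?case unfolding L' L'_def[symmetric] using L'sub inv' norm' by blast
qed


lemma Vfacts: "subgroup (Vser G H \<phi> (Suc n)) H
   \<and> (\<forall>x\<in>carrier G. \<forall>l\<in>Vser G H \<phi> (Suc n). \<phi> x l \<in> Vser G H \<phi> (Suc n))
   \<and> (\<forall>h\<in>carrier H. \<forall>l\<in>Vser G H \<phi> (Suc n). h \<otimes>\<^bsub>H\<^esub> l \<otimes>\<^bsub>H\<^esub> inv\<^bsub>H\<^esub> h \<in> Vser G H \<phi> (Suc n))"
proof (induction n)
  case 0
  show ?case by (simp add: H.subgroup_self)
next
  case (Suc n)
  define L where "L = Vser G H \<phi> (Suc n)"
  define T2 where "T2 = twist_subgroup H \<phi> (carrier G) L"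
  define C where "C = comm_subgroup H (carrier H) L"
  have L': "Vser G H \<phi> (Suc (Suc n)) = generate H (T2 \<union> C)"
    by (simp add: L_def T2_def C_def)
  define L' where "L' = generate H (T2 \<union> C)"
  have Lsub: "subgroup L H" and Linv: "\<And>x l. x \<in> carrier G \<Longrightarrow> l \<in> L \<Longrightarrow> \<phi> x l \<in> L"
    and Lnorm: "\<And>h l. h \<in> carrier H \<Longrightarrow> l \<in> L \<Longrightarrow> h \<otimes>\<^bsub>H\<^esub> l \<otimes>\<^bsub>H\<^esub> inv\<^bsub>H\<^esub> h \<in> L"
    using Suc unfolding L_def by auto
  have LC: "L \<subseteq> carrier H" using Lsub subgroup.subset by blast
  have T2C: "T2 \<subseteq> carrier H" unfolding T2_def using twist_carrier LC by blast
  have CC: "C \<subseteq> carrier H" unfolding C_def using comm_carrier LC by blast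
  have L'sub: "subgroup L' H" unfolding L'_def using T2C CC by (intro H.generate_is_subgroup) auto
  have L'C: "L' \<subseteq> carrier H" using L'sub subgroup.subset by blast
  have m2: "\<And>g l. g \<in> carrier G \<Longrightarrow> l \<in> L \<Longrightarrow> \<phi> g l \<otimes>\<^bsub>H\<^esub> inv\<^bsub>H\<^esub> l \<in> L'"
    unfolding L'_def T2_def by (rule generate.incl) (auto intro: twist_mem)
  have m3: "\<And>h l. h \<in> carrier H \<Longrightarrow> l \<in> L \<Longrightarrow> h \<otimes>\<^bsub>H\<^esub> l \<otimes>\<^bsub>H\<^esub> inv\<^bsub>H\<^esub> h \<otimes>\<^bsub>H\<^esub> inv\<^bsub>H\<^esub> l \<in> L'"
    unfolding L'_def C_def by (rule generate.incl) (auto intro: comm_mem)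
  have L'le: "L' \<subseteq> S" if S: "subgroup S H"
     and c2: "\<And>g l. g \<in> carrier G \<Longrightarrow> l \<in> L \<Longrightarrow> \<phi> g l \<otimes>\<^bsub>H\<^esub> inv\<^bsub>H\<^esub> l \<in> S"
     and c3: "\<And>h l. h \<in> carrier H \<Longrightarrow> l \<in> L \<Longrightarrow> h \<otimes>\<^bsub>H\<^esub> l \<otimes>\<^bsub>H\<^esub> inv\<^bsub>H\<^esub> h \<otimes>\<^bsub>H\<^esub> inv\<^bsub>H\<^esub> l \<in> S" for S
  proof -
    have "T2 \<subseteq> S" unfolding T2_def using twist_le[OF S] c2 by blast
    moreover have "C \<subseteq> S" unfolding C_def using comm_le[OF S] c3 by blast
    ultimately show ?thesis unfolding L'_def by (intro H.generate_subgroup_incl[OF _ S]) auto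
  qed
  have inv': "\<phi> x l \<in> L'" if x: "x \<in> carrier G" and l: "l \<in> L'" for x l
  proof -
    have S: "subgroup {l \<in> carrier H. \<phi> x l \<in> L'} H"
      by (rule H.vimage_subgroup[OF H.group_axioms phi_hom[OF x] L'sub])
    have "L' \<subseteq> {l \<in> carrier H. \<phi> x l \<in> L'}"
    proof (rule L'le[OF S])
      fix g l assume g: "g \<in> carrier G" and l: "l \<in> L"
      have lc: "l \<in> carrier H" using l LC by auto
      have "\<phi> x (\<phi> g l \<otimes>\<^bsub>H\<^esub> inv\<^bsub>H\<^esub> l) = (\<phi> (x \<otimes>\<^bsub>G\<^esub> g) l \<otimes>\<^bsub>H\<^esub> inv\<^bsub>H\<^esub> l) \<otimes>\<^bsub>H\<^esub> inv\<^bsub>H\<^esub> (\<phi> x l \<otimes>\<^bsub>H\<^esub> inv\<^bsub>H\<^esub> l)"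
        using x g lc by (simp add: H.inv_mult_group H.m_assoc)
      moreover have "(\<phi> (x \<otimes>\<^bsub>G\<^esub> g) l \<otimes>\<^bsub>H\<^esub> inv\<^bsub>H\<^esub> l) \<otimes>\<^bsub>H\<^esub> inv\<^bsub>H\<^esub> (\<phi> x l \<otimes>\<^bsub>H\<^esub> inv\<^bsub>H\<^esub> l) \<in> L'"
        using m2[OF _ l] x g subgroup.m_closed[OF L'sub] subgroup.m_inv_closed[OF L'sub] by simp
      ultimately show "\<phi> g l \<otimes>\<^bsub>H\<^esub> inv\<^bsub>H\<^esub> l \<in> {l \<in> carrier H. \<phi> x l \<in> L'}" using g lc by simp
    next
      fix h l assume h: "h \<in> carrier H" and l: "l \<in> L"
      have lc: "l \<in> carrier H" using l LC by auto
      have "\<phi> x h \<otimes>\<^bsub>H\<^esub> \<phi> x l \<otimes>\<^bsub>H\<^esub> inv\<^bsub>H\<^esub> (\<phi> x h) \<otimes>\<^bsub>H\<^esub> inv\<^bsub>H\<^esub> (\<phi> x l) \<in> L'"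
        using m3 x h Linv[OF x l] by simp
      then show "h \<otimes>\<^bsub>H\<^esub> l \<otimes>\<^bsub>H\<^esub> inv\<^bsub>H\<^esub> h \<otimes>\<^bsub>H\<^esub> inv\<^bsub>H\<^esub> l \<in> {l \<in> carrier H. \<phi> x l \<in> L'}" using x h lc by simp
    qed
    then show ?thesis using l by blast
  qed
  have cL: "h \<otimes>\<^bsub>H\<^esub> a \<otimes>\<^bsub>H\<^esub> inv\<^bsub>H\<^esub> h \<in> L'" if "a \<in> L" "a \<in> L'" "h \<in> carrier H" for a h
  proof -
    have "a \<in> carrier H" using that LC by auto
    moreover have "(h \<otimes>\<^bsub>H\<^esub> a \<otimes>\<^bsub>H\<^esub> inv\<^bsub>H\<^esub> h \<otimes>\<^bsub>H\<^esub> inv\<^bsub>H\<^esub> a) \<otimes>\<^bsub>H\<^esub> a \<in> L'"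
      using m3[OF that(3,1)] subgroup.m_closed[OF L'sub _ that(2)] by blast
    ultimately show ?thesis using conj_via_comm[of a h] that(3) by simp
  qed
  have norm': "h \<otimes>\<^bsub>H\<^esub> l \<otimes>\<^bsub>H\<^esub> inv\<^bsub>H\<^esub> h \<in> L'" if h: "h \<in> carrier H" and l: "l \<in> L'" for h l
  proof -
    have S: "subgroup {n \<in> L'. \<forall>y\<in>carrier H. y \<otimes>\<^bsub>H\<^esub> n \<otimes>\<^bsub>H\<^esub> inv\<^bsub>H\<^esub> y \<in> L'} H"
      by (rule H.conj_set_subgroup[OF L'sub]) simp
    have "L' \<subseteq> {n \<in> L'. \<forall>y\<in>carrier H. y \<otimes>\<^bsub>H\<^esub> n \<otimes>\<^bsub>H\<^esub> inv\<^bsub>H\<^esub> y \<in> L'}"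
    proof (rule L'le[OF S])
      fix g l assume g: "g \<in> carrier G" and l: "l \<in> L"
      have "\<phi> g l \<otimes>\<^bsub>H\<^esub> inv\<^bsub>H\<^esub> l \<in> L" using Linv[OF g l] l subgroup.m_closed[OF Lsub] subgroup.m_inv_closed[OF Lsub] by blast
      then show "\<phi> g l \<otimes>\<^bsub>H\<^esub> inv\<^bsub>H\<^esub> l \<in> {n \<in> L'. \<forall>y\<in>carrier H. y \<otimes>\<^bsub>H\<^esub> n \<otimes>\<^bsub>H\<^esub> inv\<^bsub>H\<^esub> y \<in> L'}"
        using cL m2[OF g l] by blast
    next
      fix k l assume k: "k \<in> carrier H" and l: "l \<in> L"
      have lc: "l \<in> carrier H" using l LC by auto
      have "(k \<otimes>\<^bsub>H\<^esub> l \<otimes>\<^bsub>H\<^esub> inv\<^bsub>H\<^esub> k) \<otimes>\<^bsub>H\<^esub> inv\<^bsub>H\<^esub> l \<in> L" using Lnorm[OF k l] l subgroup.m_closed[OF Lsub] subgroup.m_inv_closed[OF Lsub] by blast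
      then have "k \<otimes>\<^bsub>H\<^esub> l \<otimes>\<^bsub>H\<^esub> inv\<^bsub>H\<^esub> k \<otimes>\<^bsub>H\<^esub> inv\<^bsub>H\<^esub> l \<in> L" by simp
      then show "k \<otimes>\<^bsub>H\<^esub> l \<otimes>\<^bsub>H\<^esub> inv\<^bsub>H\<^esub> k \<otimes>\<^bsub>H\<^esub> inv\<^bsub>H\<^esub> l \<in> {n \<in> L'. \<forall>y\<in>carrier H. y \<otimes>\<^bsub>H\<^esub> n \<otimes>\<^bsub>H\<^esub> inv\<^bsub>H\<^esub> y \<in> L'}"
        using cL m3[OF k l] by blast
    qed
    then show ?thesis using h l by blast
  qed
  show ?case unfolding L' L'_def[symmetric] using L'sub inv' norm' by blast
qed


lemma Lser_mem1: "g \<in> lcs G (Suc n) \<Longrightarrow> h \<in> carrier H \<Longrightarrow> \<phi> g h \<otimes>\<^bsub>H\<^esub> inv\<^bsub>H\<^esub> h \<in> Lser G H \<phi> (Suc (Suc n))"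
  by (simp only: Lser.simps) (rule generate.incl, auto intro: twist_mem)
lemma Lser_mem2: "g \<in> carrier G \<Longrightarrow> l \<in> Lser G H \<phi> (Suc n) \<Longrightarrow> \<phi> g l \<otimes>\<^bsub>H\<^esub> inv\<^bsub>H\<^esub> l \<in> Lser G H \<phi> (Suc (Suc n))"
  by (simp only: Lser.simps) (rule generate.incl, auto intro: twist_mem)
lemma Lser_mem3: "h \<in> carrier H \<Longrightarrow> l \<in> Lser G H \<phi> (Suc n) \<Longrightarrow> h \<otimes>\<^bsub>H\<^esub> l \<otimes>\<^bsub>H\<^esub> inv\<^bsub>H\<^esub> h \<otimes>\<^bsub>H\<^esub> inv\<^bsub>H\<^esub> l \<in> Lser G H \<phi> (Suc (Suc n))"
  by (simp only: Lser.simps) (rule generate.incl, auto intro: comm_mem)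
lemma Vser_mem2: "g \<in> carrier G \<Longrightarrow> l \<in> Vser G H \<phi> (Suc n) \<Longrightarrow> \<phi> g l \<otimes>\<^bsub>H\<^esub> inv\<^bsub>H\<^esub> l \<in> Vser G H \<phi> (Suc (Suc n))"
  by (simp only: Vser.simps) (rule generate.incl, auto intro: twist_mem)
lemma Vser_mem3: "h \<in> carrier H \<Longrightarrow> l \<in> Vser G H \<phi> (Suc n) \<Longrightarrow> h \<otimes>\<^bsub>H\<^esub> l \<otimes>\<^bsub>H\<^esub> inv\<^bsub>H\<^esub> h \<otimes>\<^bsub>H\<^esub> inv\<^bsub>H\<^esub> l \<in> Vser G H \<phi> (Suc (Suc n))"
  by (simp only: Vser.simps) (rule generate.incl, auto intro: comm_mem)

lemma Lser_le:
  assumes S: "subgroup S H"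
     and c1: "\<And>g h. g \<in> lcs G (Suc n) \<Longrightarrow> h \<in> carrier H \<Longrightarrow> \<phi> g h \<otimes>\<^bsub>H\<^esub> inv\<^bsub>H\<^esub> h \<in> S"
     and c2: "\<And>g l. g \<in> carrier G \<Longrightarrow> l \<in> Lser G H \<phi> (Suc n) \<Longrightarrow> \<phi> g l \<otimes>\<^bsub>H\<^esub> inv\<^bsub>H\<^esub> l \<in> S"
     and c3: "\<And>h l. h \<in> carrier H \<Longrightarrow> l \<in> Lser G H \<phi> (Suc n) \<Longrightarrow> h \<otimes>\<^bsub>H\<^esub> l \<otimes>\<^bsub>H\<^esub> inv\<^bsub>H\<^esub> h \<otimes>\<^bsub>H\<^esub> inv\<^bsub>H\<^esub> l \<in> S"
   shows "Lser G H \<phi> (Suc (Suc n)) \<subseteq> S"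
proof -
  have "twist_subgroup H \<phi> (lcs G (Suc n)) (carrier H) \<subseteq> S" using twist_le[OF S] c1 by blast
  moreover have "twist_subgroup H \<phi> (carrier G) (Lser G H \<phi> (Suc n)) \<subseteq> S" using twist_le[OF S] c2 by blast
  moreover have "comm_subgroup H (carrier H) (Lser G H \<phi> (Suc n)) \<subseteq> S" using comm_le[OF S] c3 by blast
  ultimately show ?thesis by (simp only: Lser.simps) (intro H.generate_subgroup_incl[OF _ S], auto)
qed

lemma Vser_le:
  assumes S: "subgroup S H"
     and c2: "\<And>g l. g \<in> carrier G \<Longrightarrow> l \<in> Vser G H \<phi> (Suc n) \<Longrightarrow> \<phi> g l \<otimes>\<^bsub>H\<^esub> inv\<^bsub>H\<^esub> l \<in> S"
     and c3: "\<And>h l. h \<in> carrier H \<Longrightarrow> l \<in> Vser G H \<phi> (Suc n) \<Longrightarrow> h \<otimes>\<^bsub>H\<^esub> l \<otimes>\<^bsub>H\<^esub> inv\<^bsub>H\<^esub> h \<otimes>\<^bsub>H\<^esub> inv\<^bsub>H\<^esub> l \<in> S"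
   shows "Vser G H \<phi> (Suc (Suc n)) \<subseteq> S"
proof -
  have "twist_subgroup H \<phi> (carrier G) (Vser G H \<phi> (Suc n)) \<subseteq> S" using twist_le[OF S] c2 by blast
  moreover have "comm_subgroup H (carrier H) (Vser G H \<phi> (Suc n)) \<subseteq> S" using comm_le[OF S] c3 by blast
  ultimately show ?thesis by (simp only: Vser.simps) (intro H.generate_subgroup_incl[OF _ S], auto)
qed

lemma inv_P1[simp]: "x \<in> carrier H \<Longrightarrow> inv\<^bsub>P\<^esub> (x, \<one>\<^bsub>G\<^esub>) = (inv\<^bsub>H\<^esub> x, \<one>\<^bsub>G\<^esub>)"
  by simp

lemma main1: "lcs P (Suc n) = Lser G H \<phi> (Suc n) \<times> lcs G (Suc n)"
proof (induction n)
  case 0 show ?case by simp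
next
  case (Suc n)
  interpret P: group P by (rule group_P)
  define L where "L = Lser G H \<phi> (Suc n)"
  define L' where "L' = Lser G H \<phi> (Suc (Suc n))"
  define \<Gamma> where "\<Gamma> = lcs G (Suc n)"
  define \<Gamma>' where "\<Gamma>' = lcs G (Suc (Suc n))"
  have Lsub: "subgroup L H" using Lfacts unfolding L_def by blast
  have L'sub: "subgroup L' H" and L'inv: "\<And>x l. x \<in> carrier G \<Longrightarrow> l \<in> L' \<Longrightarrow> \<phi> x l \<in> L'"
    and L'norm: "\<And>h l. h \<in> carrier H \<Longrightarrow> l \<in> L' \<Longrightarrow> h \<otimes>\<^bsub>H\<^esub> l \<otimes>\<^bsub>H\<^esub> inv\<^bsub>H\<^esub> h \<in> L'"
    using Lfacts[of "Suc n"] unfolding L'_def by auto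
  have LC: "L \<subseteq> carrier H" using Lsub subgroup.subset by blast
  have L'C: "L' \<subseteq> carrier H" using L'sub subgroup.subset by blast
  have \<Gamma>sub: "subgroup \<Gamma> G" using G.lcs_facts unfolding \<Gamma>_def by blast
  have \<Gamma>'sub: "subgroup \<Gamma>' G" and \<Gamma>'n: "\<And>g a. g \<in> carrier G \<Longrightarrow> a \<in> \<Gamma>' \<Longrightarrow> g \<otimes>\<^bsub>G\<^esub> a \<otimes>\<^bsub>G\<^esub> inv\<^bsub>G\<^esub> g \<in> \<Gamma>'"
    using G.lcs_facts[of "Suc n"] unfolding \<Gamma>'_def by auto
  have \<Gamma>C: "\<Gamma> \<subseteq> carrier G" using \<Gamma>sub subgroup.subset by blast
  have \<Gamma>'C: "\<Gamma>' \<subseteq> carrier G" using \<Gamma>'sub subgroup.subset by blast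
  have \<Gamma>'\<Gamma>: "\<Gamma>' \<subseteq> \<Gamma>" using G.lcs_mono unfolding \<Gamma>_def \<Gamma>'_def .
  have Q: "lcs P (Suc (Suc n)) = comm_subgroup P (L \<times> \<Gamma>) (carrier P)"
    using Suc by (simp add: L_def \<Gamma>_def)
  define Q where "Q = lcs P (Suc (Suc n))"
  have Qsub: "subgroup Q P" using P.lcs_facts unfolding Q_def by blast
  have Qgen: "x \<otimes>\<^bsub>P\<^esub> y \<otimes>\<^bsub>P\<^esub> inv\<^bsub>P\<^esub> x \<otimes>\<^bsub>P\<^esub> inv\<^bsub>P\<^esub> y \<in> Q" if "x \<in> L \<times> \<Gamma>" "y \<in> carrier P" for x y
    unfolding Q_def Q comm_subgroup_def by (rule generate.incl) (use that in blast)
  have one\<Gamma>: "\<one>\<^bsub>G\<^esub> \<in> \<Gamma>" using subgroup.one_closed[OF \<Gamma>sub] .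
  have oneL: "\<one>\<^bsub>H\<^esub> \<in> L" using subgroup.one_closed[OF Lsub] .
  have oneL': "\<one>\<^bsub>H\<^esub> \<in> L'" using subgroup.one_closed[OF L'sub] .
  have one\<Gamma>': "\<one>\<^bsub>G\<^esub> \<in> \<Gamma>'" using subgroup.one_closed[OF \<Gamma>'sub] .
  have kap: "\<Gamma>' \<subseteq> {c \<in> carrier G. (\<one>\<^bsub>H\<^esub>, c) \<in> Q}"
    unfolding \<Gamma>'_def lcs.simps comm_subgroup_def
  proof (rule G.generate_subgroup_incl[OF _ G.vimage_subgroup[OF group_P kappa_hom Qsub]], safe)
    fix a b assume a: "a \<in> lcs G (Suc n)" and b: "b \<in> carrier G"
    have ac: "a \<in> carrier G" using a \<Gamma>C unfolding \<Gamma>_def by auto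
    show "a \<otimes>\<^bsub>G\<^esub> b \<otimes>\<^bsub>G\<^esub> inv\<^bsub>G\<^esub> a \<otimes>\<^bsub>G\<^esub> inv\<^bsub>G\<^esub> b \<in> carrier G" using ac b by simp
    have "(\<one>\<^bsub>H\<^esub>, a) \<otimes>\<^bsub>P\<^esub> (\<one>\<^bsub>H\<^esub>, b) \<otimes>\<^bsub>P\<^esub> inv\<^bsub>P\<^esub> (\<one>\<^bsub>H\<^esub>, a) \<otimes>\<^bsub>P\<^esub> inv\<^bsub>P\<^esub> (\<one>\<^bsub>H\<^esub>, b) \<in> Q"
      using Qgen[of "(\<one>\<^bsub>H\<^esub>, a)" "(\<one>\<^bsub>H\<^esub>, b)"] a b oneL unfolding \<Gamma>_def by simp
    then show "(\<one>\<^bsub>H\<^esub>, a \<otimes>\<^bsub>G\<^esub> b \<otimes>\<^bsub>G\<^esub> inv\<^bsub>G\<^esub> a \<otimes>\<^bsub>G\<^esub> inv\<^bsub>G\<^esub> b) \<in> Q" using comm_kk[OF ac b] by simp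
  qed
  have iot: "L' \<subseteq> {l \<in> carrier H. (l, \<one>\<^bsub>G\<^esub>) \<in> Q}"
    unfolding L'_def
  proof (rule Lser_le[OF H.vimage_subgroup[OF group_P iota_hom Qsub]])
    fix g h assume g: "g \<in> lcs G (Suc n)" and h: "h \<in> carrier H"
    have gc: "g \<in> carrier G" using g \<Gamma>C unfolding \<Gamma>_def by auto
    have "(\<one>\<^bsub>H\<^esub>, g) \<otimes>\<^bsub>P\<^esub> (h, \<one>\<^bsub>G\<^esub>) \<otimes>\<^bsub>P\<^esub> inv\<^bsub>P\<^esub> (\<one>\<^bsub>H\<^esub>, g) \<otimes>\<^bsub>P\<^esub> inv\<^bsub>P\<^esub> (h, \<one>\<^bsub>G\<^esub>) \<in> Q"
      using Qgen[of "(\<one>\<^bsub>H\<^esub>, g)" "(h, \<one>\<^bsub>G\<^esub>)"] g h oneL unfolding \<Gamma>_def by simp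
    then show "\<phi> g h \<otimes>\<^bsub>H\<^esub> inv\<^bsub>H\<^esub> h \<in> {l \<in> carrier H. (l, \<one>\<^bsub>G\<^esub>) \<in> Q}" using comm_ki[OF gc h] gc h by simp
  next
    fix g l assume g: "g \<in> carrier G" and l: "l \<in> Lser G H \<phi> (Suc n)"
    have lc: "l \<in> carrier H" using l LC unfolding L_def by auto
    have "(l, \<one>\<^bsub>G\<^esub>) \<otimes>\<^bsub>P\<^esub> (\<one>\<^bsub>H\<^esub>, g) \<otimes>\<^bsub>P\<^esub> inv\<^bsub>P\<^esub> (l, \<one>\<^bsub>G\<^esub>) \<otimes>\<^bsub>P\<^esub> inv\<^bsub>P\<^esub> (\<one>\<^bsub>H\<^esub>, g) \<in> Q"
      using Qgen[of "(l, \<one>\<^bsub>G\<^esub>)" "(\<one>\<^bsub>H\<^esub>, g)"] g l one\<Gamma> unfolding L_def by simp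
    then have "(inv\<^bsub>H\<^esub> (\<phi> g l \<otimes>\<^bsub>H\<^esub> inv\<^bsub>H\<^esub> l), \<one>\<^bsub>G\<^esub>) \<in> Q" using comm_ik[OF lc g] by simp
    then have "inv\<^bsub>P\<^esub> (inv\<^bsub>H\<^esub> (\<phi> g l \<otimes>\<^bsub>H\<^esub> inv\<^bsub>H\<^esub> l), \<one>\<^bsub>G\<^esub>) \<in> Q" using subgroup.m_inv_closed[OF Qsub] by blast
    then show "\<phi> g l \<otimes>\<^bsub>H\<^esub> inv\<^bsub>H\<^esub> l \<in> {l \<in> carrier H. (l, \<one>\<^bsub>G\<^esub>) \<in> Q}" using g lc by simp
  next
    fix h l assume h: "h \<in> carrier H" and l: "l \<in> Lser G H \<phi> (Suc n)"
    have lc: "l \<in> carrier H" using l LC unfolding L_def by auto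
    have "(l, \<one>\<^bsub>G\<^esub>) \<otimes>\<^bsub>P\<^esub> (h, \<one>\<^bsub>G\<^esub>) \<otimes>\<^bsub>P\<^esub> inv\<^bsub>P\<^esub> (l, \<one>\<^bsub>G\<^esub>) \<otimes>\<^bsub>P\<^esub> inv\<^bsub>P\<^esub> (h, \<one>\<^bsub>G\<^esub>) \<in> Q"
      using Qgen[of "(l, \<one>\<^bsub>G\<^esub>)" "(h, \<one>\<^bsub>G\<^esub>)"] h l one\<Gamma> unfolding L_def by simp
    then have "(l \<otimes>\<^bsub>H\<^esub> h \<otimes>\<^bsub>H\<^esub> inv\<^bsub>H\<^esub> l \<otimes>\<^bsub>H\<^esub> inv\<^bsub>H\<^esub> h, \<one>\<^bsub>G\<^esub>) \<in> Q" using comm_ii[OF lc h] by simp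
    then have "inv\<^bsub>P\<^esub> (l \<otimes>\<^bsub>H\<^esub> h \<otimes>\<^bsub>H\<^esub> inv\<^bsub>H\<^esub> l \<otimes>\<^bsub>H\<^esub> inv\<^bsub>H\<^esub> h, \<one>\<^bsub>G\<^esub>) \<in> Q" using subgroup.m_inv_closed[OF Qsub] by blast
    then show "h \<otimes>\<^bsub>H\<^esub> l \<otimes>\<^bsub>H\<^esub> inv\<^bsub>H\<^esub> h \<otimes>\<^bsub>H\<^esub> inv\<^bsub>H\<^esub> l \<in> {l \<in> carrier H. (l, \<one>\<^bsub>G\<^esub>) \<in> Q}"
      using h lc by (simp add: H.comm_inv)
  qed
  have sup: "L' \<times> \<Gamma>' \<subseteq> Q"
  proof safe
    fix l c assume l: "l \<in> L'" and c: "c \<in> \<Gamma>'"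
    have "(l, \<one>\<^bsub>G\<^esub>) \<otimes>\<^bsub>P\<^esub> (\<one>\<^bsub>H\<^esub>, c) \<in> Q" using iot kap l c subgroup.m_closed[OF Qsub] by blast
    moreover have "l \<in> carrier H" "c \<in> carrier G" using l c L'C \<Gamma>'C by auto
    ultimately show "(l, c) \<in> Q" by simp
  qed
  have Nsub: "subgroup (L' \<times> \<Gamma>') P" using product_subgroup[OF L'sub \<Gamma>'sub] L'inv \<Gamma>'C by blast
  have Nc: "x \<otimes>\<^bsub>P\<^esub> m \<otimes>\<^bsub>P\<^esub> inv\<^bsub>P\<^esub> x \<in> L' \<times> \<Gamma>'" if x: "x \<in> carrier P" and m: "m \<in> L' \<times> \<Gamma>'" for x m
  proof -
    obtain h g where hg: "x = (h, g)" "h \<in> carrier H" "g \<in> carrier G" using x by auto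
    obtain l c where lc: "m = (l, c)" "l \<in> L'" "c \<in> \<Gamma>'" using m by auto
    have lC: "l \<in> carrier H" and cC: "c \<in> carrier G" using lc L'C \<Gamma>'C by auto
    have c': "g \<otimes>\<^bsub>G\<^esub> c \<otimes>\<^bsub>G\<^esub> inv\<^bsub>G\<^esub> g \<in> \<Gamma>'" using \<Gamma>'n hg lc by blast
    have 1: "h \<otimes>\<^bsub>H\<^esub> \<phi> g l \<otimes>\<^bsub>H\<^esub> inv\<^bsub>H\<^esub> h \<in> L'" using L'norm L'inv hg lc by blast
    have 2: "\<phi> (g \<otimes>\<^bsub>G\<^esub> c \<otimes>\<^bsub>G\<^esub> inv\<^bsub>G\<^esub> g) h \<otimes>\<^bsub>H\<^esub> inv\<^bsub>H\<^esub> h \<in> L'"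
      using Lser_mem1[of "g \<otimes>\<^bsub>G\<^esub> c \<otimes>\<^bsub>G\<^esub> inv\<^bsub>G\<^esub> g" n h] c' \<Gamma>'\<Gamma> hg unfolding L'_def \<Gamma>_def by blast
    have "(h \<otimes>\<^bsub>H\<^esub> \<phi> g l \<otimes>\<^bsub>H\<^esub> inv\<^bsub>H\<^esub> h) \<otimes>\<^bsub>H\<^esub> inv\<^bsub>H\<^esub> (\<phi> (g \<otimes>\<^bsub>G\<^esub> c \<otimes>\<^bsub>G\<^esub> inv\<^bsub>G\<^esub> g) h \<otimes>\<^bsub>H\<^esub> inv\<^bsub>H\<^esub> h) \<in> L'"
      using 1 2 subgroup.m_closed[OF L'sub] subgroup.m_inv_closed[OF L'sub] by blast
    then show ?thesis using conj_P[OF hg(2,3) lC cC] hg lc c' by simp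
  qed
  have AB: "a \<otimes>\<^bsub>P\<^esub> b \<otimes>\<^bsub>P\<^esub> inv\<^bsub>P\<^esub> a \<otimes>\<^bsub>P\<^esub> inv\<^bsub>P\<^esub> b \<in> L' \<times> \<Gamma>'"
    if a: "a \<in> (\<lambda>a. (a, \<one>\<^bsub>G\<^esub>)) ` L \<union> (\<lambda>b. (\<one>\<^bsub>H\<^esub>, b)) ` \<Gamma>"
    and b: "b \<in> (\<lambda>a. (a, \<one>\<^bsub>G\<^esub>)) ` carrier H \<union> (\<lambda>b. (\<one>\<^bsub>H\<^esub>, b)) ` carrier G" for a b
  proof -
    have lL: "l \<in> L \<Longrightarrow> l \<in> carrier H" for l using LC by auto
    have cG: "c \<in> \<Gamma> \<Longrightarrow> c \<in> carrier G" for c using \<Gamma>C by auto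
    show ?thesis using a b
    proof (elim UnE imageE)
      fix l h assume "a = (l, \<one>\<^bsub>G\<^esub>)" "l \<in> L" "b = (h, \<one>\<^bsub>G\<^esub>)" "h \<in> carrier H"
      moreover have "h \<otimes>\<^bsub>H\<^esub> l \<otimes>\<^bsub>H\<^esub> inv\<^bsub>H\<^esub> h \<otimes>\<^bsub>H\<^esub> inv\<^bsub>H\<^esub> l \<in> L'"
        using Lser_mem3[of h l n] \<open>h \<in> carrier H\<close> \<open>l \<in> L\<close> unfolding L_def L'_def by blast
      then have "inv\<^bsub>H\<^esub> (h \<otimes>\<^bsub>H\<^esub> l \<otimes>\<^bsub>H\<^esub> inv\<^bsub>H\<^esub> h \<otimes>\<^bsub>H\<^esub> inv\<^bsub>H\<^esub> l) \<in> L'" using subgroup.m_inv_closed[OF L'sub] by blast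
      ultimately show ?thesis using comm_ii lL one\<Gamma>' by (simp add: H.comm_inv)
    next
      fix l g assume "a = (l, \<one>\<^bsub>G\<^esub>)" "l \<in> L" "b = (\<one>\<^bsub>H\<^esub>, g)" "g \<in> carrier G"
      moreover have "\<phi> g l \<otimes>\<^bsub>H\<^esub> inv\<^bsub>H\<^esub> l \<in> L'"
        using Lser_mem2[of g l n] \<open>g \<in> carrier G\<close> \<open>l \<in> L\<close> unfolding L_def L'_def by blast
      then have "inv\<^bsub>H\<^esub> (\<phi> g l \<otimes>\<^bsub>H\<^esub> inv\<^bsub>H\<^esub> l) \<in> L'" using subgroup.m_inv_closed[OF L'sub] by blast
      ultimately show ?thesis using comm_ik lL one\<Gamma>' by simp
    next
      fix c h assume "a = (\<one>\<^bsub>H\<^esub>, c)" "c \<in> \<Gamma>" "b = (h, \<one>\<^bsub>G\<^esub>)" "h \<in> carrier H"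
      moreover have "\<phi> c h \<otimes>\<^bsub>H\<^esub> inv\<^bsub>H\<^esub> h \<in> L'"
        using Lser_mem1[of c n h] \<open>c \<in> \<Gamma>\<close> \<open>h \<in> carrier H\<close> unfolding \<Gamma>_def L'_def by blast
      ultimately show ?thesis using comm_ki cG one\<Gamma>' by simp
    next
      fix c g assume "a = (\<one>\<^bsub>H\<^esub>, c)" "c \<in> \<Gamma>" "b = (\<one>\<^bsub>H\<^esub>, g)" "g \<in> carrier G"
      moreover have "c \<otimes>\<^bsub>G\<^esub> g \<otimes>\<^bsub>G\<^esub> inv\<^bsub>G\<^esub> c \<otimes>\<^bsub>G\<^esub> inv\<^bsub>G\<^esub> g \<in> \<Gamma>'"
        unfolding \<Gamma>'_def lcs.simps comm_subgroup_def
        by (rule generate.incl) (use \<open>c \<in> \<Gamma>\<close> \<open>g \<in> carrier G\<close> in \<open>auto simp: \<Gamma>_def\<close>)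
      ultimately show ?thesis using comm_kk cG oneL' by simp
    qed
  qed
  have gen: "x \<otimes>\<^bsub>P\<^esub> y \<otimes>\<^bsub>P\<^esub> inv\<^bsub>P\<^esub> x \<otimes>\<^bsub>P\<^esub> inv\<^bsub>P\<^esub> y \<in> L' \<times> \<Gamma>'" if xl: "x \<in> L \<times> \<Gamma>" and yP: "y \<in> carrier P" for x y
  proof -
    have x: "x \<in> generate P ((\<lambda>a. (a, \<one>\<^bsub>G\<^esub>)) ` L \<union> (\<lambda>b. (\<one>\<^bsub>H\<^esub>, b)) ` \<Gamma>)"
      using prod_gen[OF LC \<Gamma>C] xl by blast
    have y: "y \<in> generate P ((\<lambda>a. (a, \<one>\<^bsub>G\<^esub>)) ` carrier H \<union> (\<lambda>b. (\<one>\<^bsub>H\<^esub>, b)) ` carrier G)"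
      using prod_gen[of "carrier H" "carrier G"] yP by auto
    show ?thesis
      by (rule P.comm_closure2[OF P.subgroup_self Nsub Nc _ _ AB x y]) (use LC \<Gamma>C in auto)
  qed
  have sub: "Q \<subseteq> L' \<times> \<Gamma>'"
    unfolding Q_def Q comm_subgroup_def
    by (rule P.generate_subgroup_incl[OF _ Nsub]) (use gen in blast)
  show ?case using sub sup unfolding Q_def L'_def \<Gamma>'_def by blast
qed


lemma main2: "derived_series P m \<subseteq> Vser G H \<phi> (Suc m) \<times> derived_series G m"
proof (induction m)
  case 0 show ?case by (simp add: derived_series_def)
next
  case (Suc m)
  interpret P: group P by (rule group_P)
  define V where "V = Vser G H \<phi> (Suc m)"
  define V' where "V' = Vser G H \<phi> (Suc (Suc m))"
  define D where "D = derived_series G m"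
  define D' where "D' = derived_series G (Suc m)"
  have Vsub: "subgroup V H" and Vinv: "\<And>x l. x \<in> carrier G \<Longrightarrow> l \<in> V \<Longrightarrow> \<phi> x l \<in> V"
    using Vfacts unfolding V_def by auto
  have V'sub: "subgroup V' H" and V'inv: "\<And>x l. x \<in> carrier G \<Longrightarrow> l \<in> V' \<Longrightarrow> \<phi> x l \<in> V'"
    and V'norm: "\<And>h l. h \<in> carrier H \<Longrightarrow> l \<in> V' \<Longrightarrow> h \<otimes>\<^bsub>H\<^esub> l \<otimes>\<^bsub>H\<^esub> inv\<^bsub>H\<^esub> h \<in> V'"
    using Vfacts[of "Suc m"] unfolding V'_def by auto
  have VC: "V \<subseteq> carrier H" using Vsub subgroup.subset by blast
  have V'C: "V' \<subseteq> carrier H" using V'sub subgroup.subset by blast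
  have Dsub: "subgroup D G" unfolding D_def derived_series_def
    by (rule G.exp_of_derived_is_subgroup[OF G.subgroup_self])
  have D'sub: "subgroup D' G" unfolding D'_def derived_series_def
    by (rule G.exp_of_derived_is_subgroup[OF G.subgroup_self])
  have D'n: "\<And>g a. g \<in> carrier G \<Longrightarrow> a \<in> D' \<Longrightarrow> g \<otimes>\<^bsub>G\<^esub> a \<otimes>\<^bsub>G\<^esub> inv\<^bsub>G\<^esub> g \<in> D'"
    using normal.inv_op_closed2[OF G.derived_series_normal] unfolding D'_def by blast
  have DC: "D \<subseteq> carrier G" using Dsub subgroup.subset by blast
  have D'C: "D' \<subseteq> carrier G" using D'sub subgroup.subset by blast
  have D'eq: "D' = derived G D" unfolding D'_def D_def derived_series_def by simp
  have oneV': "\<one>\<^bsub>H\<^esub> \<in> V'" using subgroup.one_closed[OF V'sub] .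
  have oneD': "\<one>\<^bsub>G\<^esub> \<in> D'" using subgroup.one_closed[OF D'sub] .
  have Xsub: "subgroup (V \<times> D) P" using product_subgroup[OF Vsub Dsub] Vinv DC by blast
  have Nsub: "subgroup (V' \<times> D') P" using product_subgroup[OF V'sub D'sub] V'inv D'C by blast
  have Nc: "x \<otimes>\<^bsub>P\<^esub> n \<otimes>\<^bsub>P\<^esub> inv\<^bsub>P\<^esub> x \<in> V' \<times> D'" if x: "x \<in> V \<times> D" and n: "n \<in> V' \<times> D'" for x n
  proof -
    obtain h g where hg: "x = (h, g)" "h \<in> V" "g \<in> D" using x by auto
    have hC: "h \<in> carrier H" and gC: "g \<in> carrier G" using hg VC DC by auto
    obtain l c where lc: "n = (l, c)" "l \<in> V'" "c \<in> D'" using n by auto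
    have lC: "l \<in> carrier H" and cC: "c \<in> carrier G" using lc V'C D'C by auto
    have c': "g \<otimes>\<^bsub>G\<^esub> c \<otimes>\<^bsub>G\<^esub> inv\<^bsub>G\<^esub> g \<in> D'" using D'n gC lc by blast
    have 1: "h \<otimes>\<^bsub>H\<^esub> \<phi> g l \<otimes>\<^bsub>H\<^esub> inv\<^bsub>H\<^esub> h \<in> V'" using V'norm V'inv hC gC lc by blast
    have 2: "\<phi> (g \<otimes>\<^bsub>G\<^esub> c \<otimes>\<^bsub>G\<^esub> inv\<^bsub>G\<^esub> g) h \<otimes>\<^bsub>H\<^esub> inv\<^bsub>H\<^esub> h \<in> V'"
      using Vser_mem2[of "g \<otimes>\<^bsub>G\<^esub> c \<otimes>\<^bsub>G\<^esub> inv\<^bsub>G\<^esub> g" h m] gC cC hg unfolding V'_def V_def by simp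
    have "(h \<otimes>\<^bsub>H\<^esub> \<phi> g l \<otimes>\<^bsub>H\<^esub> inv\<^bsub>H\<^esub> h) \<otimes>\<^bsub>H\<^esub> inv\<^bsub>H\<^esub> (\<phi> (g \<otimes>\<^bsub>G\<^esub> c \<otimes>\<^bsub>G\<^esub> inv\<^bsub>G\<^esub> g) h \<otimes>\<^bsub>H\<^esub> inv\<^bsub>H\<^esub> h) \<in> V'"
      using 1 2 subgroup.m_closed[OF V'sub] subgroup.m_inv_closed[OF V'sub] by blast
    then show ?thesis using conj_P[OF hC gC lC cC] hg lc c' by simp
  qed
  have AB: "a \<otimes>\<^bsub>P\<^esub> b \<otimes>\<^bsub>P\<^esub> inv\<^bsub>P\<^esub> a \<otimes>\<^bsub>P\<^esub> inv\<^bsub>P\<^esub> b \<in> V' \<times> D'"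
    if a: "a \<in> (\<lambda>a. (a, \<one>\<^bsub>G\<^esub>)) ` V \<union> (\<lambda>b. (\<one>\<^bsub>H\<^esub>, b)) ` D"
    and b: "b \<in> (\<lambda>a. (a, \<one>\<^bsub>G\<^esub>)) ` V \<union> (\<lambda>b. (\<one>\<^bsub>H\<^esub>, b)) ` D" for a b
  proof -
    have lL: "l \<in> V \<Longrightarrow> l \<in> carrier H" for l using VC by auto
    have cG: "c \<in> D \<Longrightarrow> c \<in> carrier G" for c using DC by auto
    show ?thesis using a b
    proof (elim UnE imageE)
      fix l h assume "a = (l, \<one>\<^bsub>G\<^esub>)" "l \<in> V" "b = (h, \<one>\<^bsub>G\<^esub>)" "h \<in> V"
      moreover have "l \<otimes>\<^bsub>H\<^esub> h \<otimes>\<^bsub>H\<^esub> inv\<^bsub>H\<^esub> l \<otimes>\<^bsub>H\<^esub> inv\<^bsub>H\<^esub> h \<in> V'"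
        using Vser_mem3[of l h m] lL \<open>l \<in> V\<close> \<open>h \<in> V\<close> unfolding V_def V'_def by blast
      ultimately show ?thesis using comm_ii lL oneD' by simp
    next
      fix l g assume "a = (l, \<one>\<^bsub>G\<^esub>)" "l \<in> V" "b = (\<one>\<^bsub>H\<^esub>, g)" "g \<in> D"
      moreover have "\<phi> g l \<otimes>\<^bsub>H\<^esub> inv\<^bsub>H\<^esub> l \<in> V'"
        using Vser_mem2[of g l m] cG \<open>g \<in> D\<close> \<open>l \<in> V\<close> unfolding V_def V'_def by blast
      then have "inv\<^bsub>H\<^esub> (\<phi> g l \<otimes>\<^bsub>H\<^esub> inv\<^bsub>H\<^esub> l) \<in> V'" using subgroup.m_inv_closed[OF V'sub] by blast
      ultimately show ?thesis using comm_ik lL cG oneD' by simp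
    next
      fix c h assume "a = (\<one>\<^bsub>H\<^esub>, c)" "c \<in> D" "b = (h, \<one>\<^bsub>G\<^esub>)" "h \<in> V"
      moreover have "\<phi> c h \<otimes>\<^bsub>H\<^esub> inv\<^bsub>H\<^esub> h \<in> V'"
        using Vser_mem2[of c h m] cG \<open>c \<in> D\<close> \<open>h \<in> V\<close> unfolding V_def V'_def by blast
      ultimately show ?thesis using comm_ki cG lL oneD' by simp
    next
      fix c g assume "a = (\<one>\<^bsub>H\<^esub>, c)" "c \<in> D" "b = (\<one>\<^bsub>H\<^esub>, g)" "g \<in> D"
      moreover have "c \<otimes>\<^bsub>G\<^esub> g \<otimes>\<^bsub>G\<^esub> inv\<^bsub>G\<^esub> c \<otimes>\<^bsub>G\<^esub> inv\<^bsub>G\<^esub> g \<in> D'"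
        unfolding D'eq derived_def
        by (rule generate.incl) (use \<open>c \<in> D\<close> \<open>g \<in> D\<close> in auto)
      ultimately show ?thesis using comm_kk cG oneV' by simp
    qed
  qed
  have gen: "x \<otimes>\<^bsub>P\<^esub> y \<otimes>\<^bsub>P\<^esub> inv\<^bsub>P\<^esub> x \<otimes>\<^bsub>P\<^esub> inv\<^bsub>P\<^esub> y \<in> V' \<times> D'" if xl: "x \<in> V \<times> D" and yl: "y \<in> V \<times> D" for x y
  proof -
    have x: "x \<in> generate P ((\<lambda>a. (a, \<one>\<^bsub>G\<^esub>)) ` V \<union> (\<lambda>b. (\<one>\<^bsub>H\<^esub>, b)) ` D)"
      using prod_gen[OF VC DC] xl by blast
    have y: "y \<in> generate P ((\<lambda>a. (a, \<one>\<^bsub>G\<^esub>)) ` V \<union> (\<lambda>b. (\<one>\<^bsub>H\<^esub>, b)) ` D)"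
      using prod_gen[OF VC DC] yl by blast
    show ?thesis
      by (rule P.comm_closure2[OF Xsub Nsub Nc _ _ AB x y]) (use VC DC subgroup.one_closed[OF Vsub] subgroup.one_closed[OF Dsub] in auto)
  qed
  have ds: "derived_set P (derived_series P m) \<subseteq> V' \<times> D'"
  proof
    fix z assume "z \<in> derived_set P (derived_series P m)"
    then obtain x y where xy: "x \<in> derived_series P m" "y \<in> derived_series P m" "z = x \<otimes>\<^bsub>P\<^esub> y \<otimes>\<^bsub>P\<^esub> inv\<^bsub>P\<^esub> x \<otimes>\<^bsub>P\<^esub> inv\<^bsub>P\<^esub> y"
      by blast
    have "x \<in> V \<times> D" "y \<in> V \<times> D" using xy(1,2) Suc unfolding V_def D_def by blast+
    then show "z \<in> V' \<times> D'" using gen xy(3) by blast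
  qed
  have "derived_series P (Suc m) = derived P (derived_series P m)" by (simp add: derived_series_def)
  also have "\<dots> \<subseteq> V' \<times> D'"
    unfolding derived_def
    by (rule P.generate_subgroup_incl[OF ds Nsub])
  finally show ?case unfolding V'_def D'_def .
qed


lemma bij_inv: "S \<subseteq> carrier H \<Longrightarrow> (\<And>x l. x \<in> carrier G \<Longrightarrow> l \<in> S \<Longrightarrow> \<phi> x l \<in> S)
   \<Longrightarrow> g \<in> carrier G \<Longrightarrow> bij_betw (\<phi> g) S S"
  by (rule bij_betw_byWitness[where f'="\<phi> (inv\<^bsub>G\<^esub> g)"]) (auto simp: subset_iff)

end

theorem theorem2:
  fixes G :: "('b, 'd) monoid_scheme" and H :: "('a, 'c) monoid_scheme"
    and \<phi> :: "'b \<Rightarrow> 'a \<Rightarrow> 'a"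
  assumes "group G" and "group H"
    and "\<phi> \<in> hom G (AutoGroup H)"
    and "n \<ge> 1"
  shows "(\<forall>g \<in> lcs G n. bij_betw (\<phi> g) (Lser G H \<phi> n) (Lser G H \<phi> n))
       \<and> (\<forall>g \<in> derived_series G (n - 1). bij_betw (\<phi> g) (Vser G H \<phi> n) (Vser G H \<phi> n))
       \<and> lcs (semidirect H G \<phi>) n = Lser G H \<phi> n \<times> lcs G n
       \<and> derived_series (semidirect H G \<phi>) (n - 1) \<subseteq> Vser G H \<phi> n \<times> derived_series G (n - 1)"
proof -
  interpret sdp G H \<phi> using assms(1-3) by (simp add: sdp_def sdp_axioms_def)
  obtain k where k: "n = Suc k" using assms(4) by (cases n) auto
  have Lsub: "subgroup (Lser G H \<phi> n) H" and Linv: "\<And>x l. x \<in> carrier G \<Longrightarrow> l \<in> Lser G H \<phi> n \<Longrightarrow> \<phi> x l \<in> Lser G H \<phi> n"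
    using Lfacts[of k] unfolding k by auto
  have Vsub: "subgroup (Vser G H \<phi> n) H" and Vinv: "\<And>x l. x \<in> carrier G \<Longrightarrow> l \<in> Vser G H \<phi> n \<Longrightarrow> \<phi> x l \<in> Vser G H \<phi> n"
    using Vfacts[of k] unfolding k by auto
  have lcsC: "lcs G n \<subseteq> carrier G" using G.lcs_facts[of k] subgroup.subset unfolding k by blast
  have dC: "derived_series G (n - 1) \<subseteq> carrier G"
    unfolding derived_series_def using G.exp_of_derived_in_carrier by blast
  have 1: "\<forall>g \<in> lcs G n. bij_betw (\<phi> g) (Lser G H \<phi> n) (Lser G H \<phi> n)"
    using bij_inv[OF subgroup.subset[OF Lsub] Linv] lcsC by blast
  have 2: "\<forall>g \<in> derived_series G (n - 1). bij_betw (\<phi> g) (Vser G H \<phi> n) (Vser G H \<phi> n)"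
    using bij_inv[OF subgroup.subset[OF Vsub] Vinv] dC by blast
  have 3: "lcs (semidirect H G \<phi>) n = Lser G H \<phi> n \<times> lcs G n" using main1[of k] unfolding k .
  have 4: "derived_series (semidirect H G \<phi>) (n - 1) \<subseteq> Vser G H \<phi> n \<times> derived_series G (n - 1)"
    using main2[of k] unfolding k by simp
  show ?thesis using 1 2 3 4 by blast
qed

end
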